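(* For $p,q\in\mathbb{N}$ with $1\le q<p$, let $U_q$ be the stabiliser of $1$ in $S_q$. Then the number of orbits of the power group $S_{[p]\setminus[q]}^{\times 2}\times U_q$ on the set of all functions $([p]\setminus[q])\times([p]\setminus[q])\to[q]$ equals \[ N(p,q)=\sum_{j\vdash q-1}\ \sum_{k\vdash p-q}\left(\prod_{i=1}^{q-1} j_i!\,i^{j_i}\prod_{i=1}^{p-q}k_i!\,i^{k_i}\right)^{-1}\prod_{a,b=1}^{p-q}\Bigl(1+\sum_{d\mid \operatorname{lcm}(a,b)} d\,j_d\Bigr)^{k_ak_b\gcd(a,b)}. \]
   Context: $[p]=\{1,\ldots,p\}$. Power group: if groups $A,B$ act on finite sets $X,Y$, then $A\times B$ acts on functions $f:X\to Y$ by $f^{(\alpha,\beta)}(x)=(f(x^\alpha))^\beta$. $S_X^{\times 2}$ (for $X=[p]\setminus[q]$) is the symmetric group $S_X$ acting on $X\times X$ by $(x_1,x_2)^\alpha=(x_1^\alpha,x_2^\alpha)$; $U_q$ acts naturally on $[q]$. $j\vdash n$ denotes a partition of $n$ (empty if $n=0$) and $j_i$ the number of parts equal to $i$. *)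

theory Defs
  imports Complex_Main "HOL-Library.FuncSet" "HOL-Combinatorics.Permutations"
begin

definition Xset :: "nat \<Rightarrow> nat \<Rightarrow> nat set" where
  "Xset p q = {1..p} - {1..q}"

definition funs :: "nat \<Rightarrow> nat \<Rightarrow> (nat \<times> nat \<Rightarrow> nat) set" where
  "funs p q = (Xset p q \<times> Xset p q) \<rightarrow>\<^sub>E {1..q}"

definition pg_act :: "nat \<Rightarrow> nat \<Rightarrow> (nat \<Rightarrow> nat) \<Rightarrow> (nat \<Rightarrow> nat) \<Rightarrow> (nat \<times> nat \<Rightarrow> nat) \<Rightarrow> (nat \<times> nat \<Rightarrow> nat)" where
  "pg_act p q \<alpha> \<beta> f = restrict (\<lambda>(x1, x2). \<beta> (f (\<alpha> x1, \<alpha> x2))) (Xset p q \<times> Xset p q)"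

text \<open>Group elements of S_X^{x2} \<times> U_q: alpha a permutation of X, beta a permutation of [q] fixing 1.\<close>
definition pg_elems :: "nat \<Rightarrow> nat \<Rightarrow> ((nat \<Rightarrow> nat) \<times> (nat \<Rightarrow> nat)) set" where
  "pg_elems p q = {(\<alpha>, \<beta>). \<alpha> permutes Xset p q \<and> \<beta> permutes {1..q} \<and> \<beta> 1 = 1}"

definition pg_orbit :: "nat \<Rightarrow> nat \<Rightarrow> (nat \<times> nat \<Rightarrow> nat) \<Rightarrow> (nat \<times> nat \<Rightarrow> nat) set" where
  "pg_orbit p q f = {pg_act p q \<alpha> \<beta> f | \<alpha> \<beta>. (\<alpha>, \<beta>) \<in> pg_elems p q}"

definition num_orbits :: "nat \<Rightarrow> nat \<Rightarrow> nat" where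
  "num_orbits p q = card (pg_orbit p q ` funs p q)"

text \<open>Partitions of n, represented by their multiplicity functions j (j i = number of parts equal to i).\<close>
definition partitions_mult :: "nat \<Rightarrow> (nat \<Rightarrow> nat) set" where
  "partitions_mult n = {j. (\<forall>i. j i \<noteq> 0 \<longrightarrow> 1 \<le> i \<and> i \<le> n) \<and> (\<Sum>i=1..n. i * j i) = n}"

definition N_formula :: "nat \<Rightarrow> nat \<Rightarrow> real" where
  "N_formula p q =
    (\<Sum>j\<in>partitions_mult (q - 1). \<Sum>k\<in>partitions_mult (p - q).
      inverse ((\<Prod>i=1..q-1. fact (j i) * real i ^ j i) * (\<Prod>i=1..p-q. fact (k i) * real i ^ k i))
      * (\<Prod>a=1..p-q. \<Prod>b=1..p-q.
           (1 + real (\<Sum>d | d dvd lcm a b. d * j d)) ^ (k a * k b * gcd a b)))"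

end

theory Submission
  imports Defs "HOL-Combinatorics.Orbits" "HOL-Algebra.Group_Action"
begin

definition per :: "('a \<Rightarrow> 'a) \<Rightarrow> 'a \<Rightarrow> nat" where
  "per f x = (LEAST n. 0 < n \<and> (f ^^ n) x = x)"

definition periodic :: "('a \<Rightarrow> 'a) \<Rightarrow> 'a \<Rightarrow> bool" where
  "periodic f x \<longleftrightarrow> (\<exists>n>0. (f ^^ n) x = x)"

lemma per_props:
  assumes "periodic f x"
  shows "0 < per f x" "(f ^^ per f x) x = x"
proof -
  obtain n where n: "0 < n \<and> (f ^^ n) x = x" using assms unfolding periodic_def by auto
  have "0 < per f x \<and> (f ^^ per f x) x = x"
    unfolding per_def by (rule LeastI[where k=n]) (rule n)
  thus "0 < per f x" "(f ^^ per f x) x = x" by auto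
qed

lemma per_least:
  assumes "0 < m" "m < per f x"
  shows "(f ^^ m) x \<noteq> x"
  using not_less_Least[of m "\<lambda>n. 0 < n \<and> (f ^^ n) x = x"] assms unfolding per_def by auto

lemma funpow_mult_per:
  assumes "(f ^^ L) x = x"
  shows "(f ^^ (L * c)) x = x"
proof (induction c)
  case 0 then show ?case by simp
next
  case (Suc c)
  have "(f ^^ (L * Suc c)) x = (f ^^ L) ((f ^^ (L * c)) x)"
    by (simp add: funpow_add)
  then show ?case using Suc assms by simp
qed

lemma funpow_mod_per:
  assumes "periodic f x"
  shows "(f ^^ m) x = (f ^^ (m mod per f x)) x"
proof -
  let ?L = "per f x"
  have "m = m mod ?L + ?L * (m div ?L)" by simp
  hence "(f ^^ m) x = (f ^^ (m mod ?L)) ((f ^^ (?L * (m div ?L))) x)"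
    by (metis comp_apply funpow_add)
  also have "\<dots> = (f ^^ (m mod ?L)) x"
    using funpow_mult_per[OF per_props(2)[OF assms]] by simp
  finally show ?thesis .
qed

lemma funpow_per_dvd:
  assumes "periodic f x"
  shows "(f ^^ m) x = x \<longleftrightarrow> per f x dvd m"
proof
  assume h: "(f ^^ m) x = x"
  have "(f ^^ (m mod per f x)) x = x" using h funpow_mod_per[OF assms, of m] by simp
  moreover have "m mod per f x < per f x" using per_props(1)[OF assms] by simp
  ultimately have "m mod per f x = 0" using per_least[of "m mod per f x" f x] by (cases "m mod per f x = 0") auto
  thus "per f x dvd m" by auto
next
  assume "per f x dvd m"
  then obtain c where "m = per f x * c" by auto
  thus "(f ^^ m) x = x" using funpow_mult_per[OF per_props(2)[OF assms]] by simp
qed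

lemma per_unique:
  assumes "periodic f x" "periodic f y" "\<And>n. (f ^^ n) x = x \<longleftrightarrow> (f ^^ n) y = y"
  shows "per f x = per f y"
  unfolding per_def using assms(3) by simp

lemma periodic_iter:
  assumes "inj f" "periodic f x"
  shows "periodic f ((f ^^ i) x)"
proof -
  obtain n where "0 < n" "(f ^^ n) x = x" using assms unfolding periodic_def by auto
  moreover have "(f ^^ n) ((f ^^ i) x) = (f ^^ i) ((f ^^ n) x)"
    by (metis add.commute comp_apply funpow_add)
  ultimately show ?thesis unfolding periodic_def by auto
qed

lemma per_iter:
  assumes "inj f" "periodic f x"
  shows "per f ((f ^^ i) x) = per f x"
proof (rule per_unique[OF periodic_iter[OF assms] assms(2)])
  fix n
  have "(f ^^ n) ((f ^^ i) x) = (f ^^ i) ((f ^^ n) x)"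
    by (metis add.commute comp_apply funpow_add)
  moreover have "inj (f ^^ i)" using inj_fn[OF assms(1)] .
  ultimately show "(f ^^ n) ((f ^^ i) x) = (f ^^ i) x \<longleftrightarrow> (f ^^ n) x = x"
    by (metis injD)
qed

lemma permutes_periodic:
  assumes "finite S" "f permutes S"
  shows "periodic f x"
proof -
  have "permutation f" using permutes_imp_permutation[OF assms] .
  from Orbits.permutation_self_in_orbit[OF this, of x]
  show ?thesis unfolding Orbits.orbit_altdef periodic_def by auto
qed

definition orb :: "('a \<Rightarrow> 'a) \<Rightarrow> 'a \<Rightarrow> 'a set" where
  "orb f x = (\<lambda>i. (f ^^ i) x) ` {..<per f x}"

lemma orb_inj:
  assumes "periodic f x" "i < per f x" "j < per f x" "(f ^^ i) x = (f ^^ j) x"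
  shows "i = j"
proof (rule ccontr)
  assume ne: "i \<noteq> j"
  let ?L = "per f x"
  have key: "\<And>i j. i < j \<Longrightarrow> j < ?L \<Longrightarrow> (f ^^ i) x = (f ^^ j) x \<Longrightarrow> False"
  proof -
    fix i j assume ij: "i < j" "j < ?L" "(f ^^ i) x = (f ^^ j) x"
    have "(f ^^ (?L - j + i)) x = (f ^^ (?L - j)) ((f ^^ i) x)" by (simp add: funpow_add)
    also have "\<dots> = (f ^^ (?L - j)) ((f ^^ j) x)" using ij by simp
    also have "\<dots> = (f ^^ (?L - j + j)) x" by (simp add: funpow_add)
    also have "\<dots> = x" using ij per_props(2)[OF assms(1)] by simp
    finally have "(f ^^ (?L - j + i)) x = x" .
    moreover have "0 < ?L - j + i" "?L - j + i < ?L" using ij by auto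
    ultimately show False using per_least[of "?L - j + i" f x] by simp
  qed
  show False
  proof (cases "i < j")
    case True then show False using key[of i j] assms(3,4) by simp
  next
    case False then have "j < i" using ne by simp
    then show False using key[of j i] assms(2,4) by simp
  qed
qed

lemma orb_card:
  assumes "periodic f x"
  shows "card (orb f x) = per f x"
proof -
  have "inj_on (\<lambda>i. (f ^^ i) x) {..<per f x}"
    using orb_inj[OF assms] by (auto simp: inj_on_def)
  thus ?thesis unfolding orb_def by (simp add: card_image)
qed

lemma finite_orb: "finite (orb f x)"
  unfolding orb_def by simp

lemma in_orb:
  assumes "periodic f x"
  shows "(f ^^ i) x \<in> orb f x"
  unfolding orb_def using funpow_mod_per[OF assms, of i] per_props(1)[OF assms] by auto

lemma self_in_orb:
  assumes "periodic f x"
  shows "x \<in> orb f x"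
  using in_orb[OF assms, of 0] by simp

lemma orb_closed:
  assumes "periodic f x" "y \<in> orb f x"
  shows "f y \<in> orb f x"
proof -
  obtain i where "y = (f ^^ i) x" using assms(2) unfolding orb_def by auto
  hence "f y = (f ^^ Suc i) x" by simp
  thus ?thesis using in_orb[OF assms(1), of "Suc i"] by (simp del: funpow.simps)
qed

lemma funpow_in_set:
  assumes "\<And>y. y \<in> S \<Longrightarrow> f y \<in> S" "x \<in> S"
  shows "(f ^^ i) x \<in> S"
  by (induction i) (use assms in auto)

lemma orb_sub:
  assumes "\<And>y. y \<in> S \<Longrightarrow> f y \<in> S" "x \<in> S"
  shows "orb f x \<subseteq> S"
  unfolding orb_def using funpow_in_set[OF assms] by auto

lemma orb_compl:
  assumes "inj f" "periodic f x" "y \<notin> orb f x"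
  shows "f y \<notin> orb f x"
proof
  assume "f y \<in> orb f x"
  then obtain i where i: "f y = (f ^^ i) x" unfolding orb_def by auto
  have eq: "(f ^^ i) x = (f ^^ (i + per f x)) x"
    using funpow_mod_per[OF assms(2), of i] funpow_mod_per[OF assms(2), of "i + per f x"] by simp
  obtain k where k: "i + per f x = Suc k" using per_props(1)[OF assms(2)]
    by (metis add_gr_0 gr0_conv_Suc)
  have "f y = (f ^^ (i + per f x)) x" using i eq by (rule trans)
  also have "\<dots> = f ((f ^^ k) x)" by (simp add: k)
  finally have "f y = f ((f ^^ k) x)" .
  hence "y = (f ^^ k) x" using assms(1) by (simp add: inj_eq)
  thus False using assms(3) in_orb[OF assms(2), of k] by simp
qed

lemma per_orb:
  assumes "inj f" "periodic f x" "y \<in> orb f x"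
  shows "per f y = per f x"
  using assms(3) per_iter[OF assms(1,2)] unfolding orb_def by auto

lemma periodic_orb:
  assumes "inj f" "periodic f x" "y \<in> orb f x"
  shows "periodic f y"
  using assms(3) periodic_iter[OF assms(1,2)] unfolding orb_def by auto

lemma per_le_card:
  assumes "finite S" "\<And>y. y \<in> S \<Longrightarrow> f y \<in> S" "x \<in> S" "periodic f x"
  shows "per f x \<le> card S"
proof -
  have "orb f x \<subseteq> S" by (rule orb_sub) (use assms in auto)
  thus ?thesis using card_mono[OF assms(1)] orb_card[OF assms(4)] by metis
qed

definition FixS :: "('a \<Rightarrow> 'a) \<Rightarrow> ('b \<Rightarrow> 'b) \<Rightarrow> 'b set \<Rightarrow> 'a set \<Rightarrow> ('a \<Rightarrow> 'b) set" where
  "FixS \<pi> \<beta> B S = {f \<in> S \<rightarrow>\<^sub>E B. \<forall>x\<in>S. \<beta> (f (\<pi> x)) = f x}"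

definition gfix :: "('b \<Rightarrow> 'b) \<Rightarrow> 'b set \<Rightarrow> nat \<Rightarrow> nat" where
  "gfix \<beta> B L = card {v \<in> B. (\<beta> ^^ L) v = v}"

lemma fix_orbit_iter:
  assumes "periodic \<pi> s" "f \<in> FixS \<pi> \<beta> B (orb \<pi> s)"
  shows "f s = (\<beta> ^^ i) (f ((\<pi> ^^ i) s))"
proof (induction i)
  case 0 then show ?case by simp
next
  case (Suc i)
  have "(\<pi> ^^ i) s \<in> orb \<pi> s" by (rule in_orb[OF assms(1)])
  hence "\<beta> (f (\<pi> ((\<pi> ^^ i) s))) = f ((\<pi> ^^ i) s)" using assms(2) unfolding FixS_def by auto
  moreover have "(\<beta> ^^ Suc i) z = (\<beta> ^^ i) (\<beta> z)" for z
    by (simp add: funpow_Suc_right del: funpow.simps)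
  moreover have "(\<pi> ^^ Suc i) s = \<pi> ((\<pi> ^^ i) s)" by simp
  ultimately have "(\<beta> ^^ Suc i) (f ((\<pi> ^^ Suc i) s)) = (\<beta> ^^ i) (f ((\<pi> ^^ i) s))"
    by (simp del: funpow.simps)
  then show ?case using Suc by simp
qed

lemma bij_funpow_maps:
  assumes "\<beta> permutes B" "v \<in> B"
  shows "(\<beta> ^^ i) v \<in> B"
  by (rule funpow_in_set[of B \<beta>]) (use assms permutes_in_image[OF assms(1)] in auto)

lemma fix_orbit_card:
  assumes "inj \<pi>" "periodic \<pi> s" "\<beta> permutes B"
  shows "card (FixS \<pi> \<beta> B (orb \<pi> s)) = gfix \<beta> B (per \<pi> s)"
proof -
  let ?L = "per \<pi> s" and ?O = "orb \<pi> s"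
  have L0: "0 < ?L" and Ls: "(\<pi> ^^ ?L) s = s" using per_props[OF assms(2)] by auto
  have sO: "s \<in> ?O" by (rule self_in_orb[OF assms(2)])
  have injb: "inj (\<beta> ^^ i)" for i using inj_fn permutes_inj[OF assms(3)] by blast
  have "bij_betw (\<lambda>f. f s) (FixS \<pi> \<beta> B ?O) {v \<in> B. (\<beta> ^^ ?L) v = v}"
  proof (rule bij_betwI')
    fix f g assume f: "f \<in> FixS \<pi> \<beta> B ?O" and g: "g \<in> FixS \<pi> \<beta> B ?O"
    show "(f s = g s) = (f = g)"
    proof
      assume fg: "f s = g s"
      show "f = g"
      proof
        fix y
        show "f y = g y"
        proof (cases "y \<in> ?O")
          case True
          then obtain i where y: "y = (\<pi> ^^ i) s" unfolding orb_def by auto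
          have "(\<beta> ^^ i) (f y) = (\<beta> ^^ i) (g y)"
            using fix_orbit_iter[OF assms(2) f, of i] fix_orbit_iter[OF assms(2) g, of i] fg y by simp
          thus ?thesis using injb by (simp add: inj_eq)
        next
          case False
          thus ?thesis using f g unfolding FixS_def by (auto simp: PiE_def extensional_def)
        qed
      qed
    qed simp
  next
    fix f assume f: "f \<in> FixS \<pi> \<beta> B ?O"
    have "f s \<in> B" using f sO unfolding FixS_def by auto
    moreover have "(\<beta> ^^ ?L) (f s) = f s" using fix_orbit_iter[OF assms(2) f, of ?L] Ls by simp
    ultimately show "f s \<in> {v \<in> B. (\<beta> ^^ ?L) v = v}" by simp
  next
    fix v assume v: "v \<in> {v \<in> B. (\<beta> ^^ ?L) v = v}"
    define d where "d y = (LEAST i. (\<pi> ^^ i) s = y)" for y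
    have d: "d ((\<pi> ^^ i) s) = i" if "i < ?L" for i
      unfolding d_def
    proof (rule Least_equality)
      fix j assume "(\<pi> ^^ j) s = (\<pi> ^^ i) s"
      show "i \<le> j"
      proof (rule ccontr)
        assume "\<not> i \<le> j"
        hence "j < ?L" using that by simp
        thus False using orb_inj[OF assms(2) that, of j] \<open>(\<pi> ^^ j) s = (\<pi> ^^ i) s\<close> \<open>\<not> i \<le> j\<close> by simp
      qed
    qed simp
    define h where "h = restrict (\<lambda>y. (\<beta> ^^ (?L - d y)) v) ?O"
    have "h \<in> FixS \<pi> \<beta> B ?O"
      unfolding FixS_def
    proof (intro CollectI conjI ballI)
      show "h \<in> ?O \<rightarrow>\<^sub>E B" unfolding h_def using bij_funpow_maps[OF assms(3)] v by auto
    next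
      fix y assume "y \<in> ?O"
      then obtain i where i: "i < ?L" "y = (\<pi> ^^ i) s" unfolding orb_def by auto
      have py: "\<pi> y = (\<pi> ^^ Suc i) s" using i by simp
      have piO: "\<pi> y \<in> ?O" using orb_closed[OF assms(2) \<open>y \<in> ?O\<close>] .
      show "\<beta> (h (\<pi> y)) = h y"
      proof (cases "Suc i < ?L")
        case True
        have "h (\<pi> y) = (\<beta> ^^ (?L - Suc i)) v" unfolding h_def using piO py d[OF True] by simp
        moreover have "h y = (\<beta> ^^ (?L - i)) v" unfolding h_def using \<open>y \<in> ?O\<close> i d by simp
        moreover have "?L - i = Suc (?L - Suc i)" using True by simp
        ultimately show ?thesis by simp
      next
        case False
        hence Si: "Suc i = ?L" using i by simp
        hence "\<pi> y = s" using py Ls by simp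
        hence "h (\<pi> y) = (\<beta> ^^ ?L) v" unfolding h_def using sO d[OF L0] by simp
        hence "h (\<pi> y) = v" using v by simp
        moreover have "h y = (\<beta> ^^ (?L - i)) v" unfolding h_def using \<open>y \<in> ?O\<close> i d by simp
        moreover have "?L - i = 1" using Si by simp
        ultimately show ?thesis by simp
      qed
    qed
    moreover have "h s = v" unfolding h_def using sO d[OF L0] v by simp
    ultimately show "\<exists>f \<in> FixS \<pi> \<beta> B ?O. v = f s" by metis
  qed
  thus ?thesis unfolding gfix_def by (rule bij_betw_same_card)
qed

lemma fix_split:
  assumes "inj \<pi>" "periodic \<pi> s" "orb \<pi> s \<subseteq> S" "\<And>x. x \<in> S \<Longrightarrow> \<pi> x \<in> S"
  shows "card (FixS \<pi> \<beta> B S) = card (FixS \<pi> \<beta> B (orb \<pi> s)) * card (FixS \<pi> \<beta> B (S - orb \<pi> s))"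
proof -
  let ?O = "orb \<pi> s"
  have "bij_betw (\<lambda>f. (restrict f ?O, restrict f (S - ?O))) (FixS \<pi> \<beta> B S)
          (FixS \<pi> \<beta> B ?O \<times> FixS \<pi> \<beta> B (S - ?O))"
  proof (rule bij_betwI')
    fix f g assume f: "f \<in> FixS \<pi> \<beta> B S" and g: "g \<in> FixS \<pi> \<beta> B S"
    show "((restrict f ?O, restrict f (S - ?O)) = (restrict g ?O, restrict g (S - ?O))) = (f = g)"
    proof
      assume eq: "(restrict f ?O, restrict f (S - ?O)) = (restrict g ?O, restrict g (S - ?O))"
      show "f = g"
      proof
        fix y
        show "f y = g y"
        proof (cases "y \<in> S")
          case True
          then show ?thesis using eq by (cases "y \<in> ?O") (auto simp: fun_eq_iff restrict_def split: if_splits; metis)+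
        next
          case False
          thus ?thesis using f g unfolding FixS_def by (auto simp: PiE_def extensional_def)
        qed
      qed
    qed simp
  next
    fix f assume f: "f \<in> FixS \<pi> \<beta> B S"
    have cO: "\<pi> x \<in> ?O" if "x \<in> ?O" for x using orb_closed[OF assms(2) that] .
    have cS: "\<pi> x \<in> S - ?O" if "x \<in> S - ?O" for x using orb_compl[OF assms(1,2)] assms(4) that by auto
    show "(restrict f ?O, restrict f (S - ?O)) \<in> FixS \<pi> \<beta> B ?O \<times> FixS \<pi> \<beta> B (S - ?O)"
      using f assms(3) cO cS unfolding FixS_def by (auto simp: PiE_def Pi_def)
  next
    fix fg assume fg: "fg \<in> FixS \<pi> \<beta> B ?O \<times> FixS \<pi> \<beta> B (S - ?O)"
    obtain f1 f2 where fg': "fg = (f1, f2)" "f1 \<in> FixS \<pi> \<beta> B ?O" "f2 \<in> FixS \<pi> \<beta> B (S - ?O)"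
      using fg by auto
    define h where "h x = (if x \<in> ?O then f1 x else f2 x)" for x
    have cO: "\<pi> x \<in> ?O" if "x \<in> ?O" for x using orb_closed[OF assms(2) that] .
    have cS: "\<pi> x \<notin> ?O" if "x \<notin> ?O" for x using orb_compl[OF assms(1,2)] that by auto
    have f1e: "f1 x = undefined" if "x \<notin> ?O" for x using fg'(2) that unfolding FixS_def by (auto simp: PiE_def extensional_def)
    have f2e: "f2 x = undefined" if "x \<notin> S - ?O" for x using fg'(3) that unfolding FixS_def by (auto simp: PiE_def extensional_def)
    have "h \<in> FixS \<pi> \<beta> B S"
      unfolding FixS_def
    proof (intro CollectI conjI ballI)
      show "h \<in> S \<rightarrow>\<^sub>E B"
        using fg'(2,3) assms(3) f2e unfolding FixS_def h_def by (auto simp: PiE_def Pi_def extensional_def)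
    next
      fix x assume "x \<in> S"
      show "\<beta> (h (\<pi> x)) = h x"
      proof (cases "x \<in> ?O")
        case True
        then show ?thesis using cO fg'(2) unfolding h_def FixS_def by auto
      next
        case False
        then show ?thesis using cS[OF False] fg'(3) \<open>x \<in> S\<close> unfolding h_def FixS_def by auto
      qed
    qed
    moreover have "fg = (restrict h ?O, restrict h (S - ?O))"
      using fg'(1) f1e f2e unfolding h_def by (auto simp: fun_eq_iff restrict_def)
    ultimately show "\<exists>f \<in> FixS \<pi> \<beta> B S. fg = (restrict f ?O, restrict f (S - ?O))" by blast
  qed
  hence "card (FixS \<pi> \<beta> B S) = card (FixS \<pi> \<beta> B ?O \<times> FixS \<pi> \<beta> B (S - ?O))"
    by (rule bij_betw_same_card)
  thus ?thesis by (simp add: card_cartesian_product)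
qed

lemma funpow_fixpoint: "\<beta> v0 = v0 \<Longrightarrow> (\<beta> ^^ n) v0 = v0"
  by (induction n) auto

lemma fix_card_prod:
  assumes "inj \<pi>" "\<And>x. periodic \<pi> x" "\<beta> permutes B" "finite B" "v0 \<in> B" "\<beta> v0 = v0"
    and "finite S" "\<And>x. x \<in> S \<Longrightarrow> \<pi> x \<in> S"
  shows "real (card (FixS \<pi> \<beta> B S)) =
     (\<Prod>x\<in>S. real (gfix \<beta> B (per \<pi> x)) powr (1 / real (per \<pi> x)))"
  using assms(7,8)
proof (induction S rule: finite_psubset_induct)
  case (psubset S)
  show ?case
  proof (cases "S = {}")
    case True
    then show ?thesis by (simp add: FixS_def PiE_empty_domain)
  next
    case False
    then obtain s where s: "s \<in> S" by auto
    let ?O = "orb \<pi> s" and ?L = "per \<pi> s"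
    have OS: "?O \<subseteq> S" by (rule orb_sub[OF psubset.prems s])
    have sO: "s \<in> ?O" by (rule self_in_orb[OF assms(2)])
    have sub: "S - ?O \<subset> S" using sO s by auto
    have inv: "\<pi> x \<in> S - ?O" if "x \<in> S - ?O" for x
      using orb_compl[OF assms(1,2)] psubset.prems that by auto
    have IH: "real (card (FixS \<pi> \<beta> B (S - ?O))) =
      (\<Prod>x\<in>S - ?O. real (gfix \<beta> B (per \<pi> x)) powr (1 / real (per \<pi> x)))"
      by (rule psubset.IH[OF sub inv]) auto
    have L0: "0 < ?L" using per_props(1)[OF assms(2)] .
    have gpos: "0 < gfix \<beta> B ?L"
    proof -
      have "v0 \<in> {v \<in> B. (\<beta> ^^ ?L) v = v}" using assms(5,6) funpow_fixpoint[of \<beta> v0] by simp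
      moreover have "finite {v \<in> B. (\<beta> ^^ ?L) v = v}" using assms(4) by simp
      ultimately show ?thesis unfolding gfix_def by (auto simp: card_gt_0_iff)
    qed
    have "(\<Prod>x\<in>?O. real (gfix \<beta> B (per \<pi> x)) powr (1 / real (per \<pi> x)))
        = (\<Prod>x\<in>?O. real (gfix \<beta> B ?L) powr (1 / real ?L))"
      using per_orb[OF assms(1,2)] by simp
    also have "\<dots> = (real (gfix \<beta> B ?L) powr (1 / real ?L)) ^ ?L"
      using orb_card[OF assms(2)] by simp
    also have "\<dots> = real (gfix \<beta> B ?L)"
      using gpos L0 by (simp add: powr_power)
    finally have PO: "(\<Prod>x\<in>?O. real (gfix \<beta> B (per \<pi> x)) powr (1 / real (per \<pi> x)))
        = real (card (FixS \<pi> \<beta> B ?O))"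
      using fix_orbit_card[OF assms(1,2,3)] by simp
    have "real (card (FixS \<pi> \<beta> B S)) = real (card (FixS \<pi> \<beta> B ?O)) * real (card (FixS \<pi> \<beta> B (S - ?O)))"
      using fix_split[OF assms(1,2) OS psubset.prems, of \<beta> B] by simp
    also have "\<dots> = (\<Prod>x\<in>S. real (gfix \<beta> B (per \<pi> x)) powr (1 / real (per \<pi> x)))"
      using prod.subset_diff[OF OS psubset.hyps(1), of "\<lambda>x. real (gfix \<beta> B (per \<pi> x)) powr (1 / real (per \<pi> x))"] PO IH by (simp add: mult.commute)
    finally show ?thesis .
  qed
qed

definition cnt :: "'a set \<Rightarrow> ('a \<Rightarrow> 'a) \<Rightarrow> nat \<Rightarrow> nat" where
  "cnt S \<sigma> d = card {x \<in> S. per \<sigma> x = d}"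

lemma card_filter_Un:
  assumes "finite A" "finite B" "A \<inter> B = {}"
  shows "card {x \<in> A \<union> B. P x} = card {x \<in> A. P x} + card {x \<in> B. P x}"
proof -
  have "{x \<in> A \<union> B. P x} = {x \<in> A. P x} \<union> {x \<in> B. P x}" by auto
  thus ?thesis using assms by (simp add: card_Un_disjoint disjoint_iff)
qed

lemma card_filter_orb:
  assumes "inj f" "periodic f x"
  shows "card {y \<in> orb f x. per f y = i} = (if i = per f x then per f x else 0)"
proof -
  have "{y \<in> orb f x. per f y = i} = (if i = per f x then orb f x else {})"
    using per_orb[OF assms] by auto
  thus ?thesis using orb_card[OF assms(2)] by simp
qed

lemma cnt_transp:
  assumes fin: "finite S" and sp: "\<sigma> permutes S" and a: "a \<notin> S" and b: "b \<in> S"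
  shows "cnt S \<sigma> i + (if i = per \<sigma> b + 1 then per \<sigma> b + 1 else 0)
       = cnt (insert a S) (transpose a b \<circ> \<sigma>) i + (if i = per \<sigma> b then per \<sigma> b else 0)"
proof -
  let ?\<tau> = "transpose a b \<circ> \<sigma>" and ?L = "per \<sigma> b" and ?O = "orb \<sigma> b"
  have per_s: "periodic \<sigma> x" for x by (rule permutes_periodic[OF fin sp])
  have inj_s: "inj \<sigma>" using permutes_inj[OF sp] .
  have tp: "?\<tau> permutes insert a S"
    by (meson insertI1 insertI2 permutes_compose permutes_subset permutes_swap_id sp subset_insertI b)
  have per_t: "periodic ?\<tau> x" for x by (rule permutes_periodic[OF _ tp]) (use fin in simp)
  have inj_t: "inj ?\<tau>" using permutes_inj[OF tp] .
  have sa: "\<sigma> a = a" using sp a by (simp add: permutes_not_in)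
  have inS: "\<sigma> y \<in> S" if "y \<in> S" for y using sp that by (simp add: permutes_in_image)
  have OS: "?O \<subseteq> S" by (rule orb_sub[OF inS b])
  have L0: "0 < ?L" and Lb: "(\<sigma> ^^ ?L) b = b" using per_props[OF per_s] by auto
  define R where "R = S - ?O"
  have Rstep: "\<sigma> y \<in> R \<and> ?\<tau> y = \<sigma> y" if "y \<in> R" for y
  proof -
    have "\<sigma> y \<in> R" using that orb_compl[OF inj_s per_s] inS unfolding R_def by auto
    moreover have "\<sigma> y \<noteq> a" using \<open>\<sigma> y \<in> R\<close> a unfolding R_def by auto
    moreover have "\<sigma> y \<noteq> b" using \<open>\<sigma> y \<in> R\<close> self_in_orb[OF per_s] unfolding R_def by auto
    ultimately show ?thesis by simp
  qed
  have Riter: "(?\<tau> ^^ n) x = (\<sigma> ^^ n) x \<and> (\<sigma> ^^ n) x \<in> R" if "x \<in> R" for x n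
    by (induction n) (use that Rstep in auto)
  have perR: "per ?\<tau> x = per \<sigma> x" if "x \<in> R" for x
    unfolding per_def using Riter[OF that] by simp
  have tb_lt: "(?\<tau> ^^ i) b = (\<sigma> ^^ i) b" if "i < ?L" for i
    using that
  proof (induction i)
    case 0 then show ?case by simp
  next
    case (Suc i)
    have "(\<sigma> ^^ Suc i) b \<noteq> b" using per_least[of "Suc i" \<sigma> b] Suc.prems by simp
    moreover have "(\<sigma> ^^ Suc i) b \<noteq> a" using funpow_in_set[of S \<sigma> b "Suc i", OF inS b] a by auto
    ultimately show ?case using Suc by simp
  qed
  obtain m where m: "?L = Suc m" using L0 gr0_conv_Suc by blast
  have tbL: "(?\<tau> ^^ ?L) b = a"
  proof -
    have "(?\<tau> ^^ ?L) b = ?\<tau> ((\<sigma> ^^ m) b)" using tb_lt[of m] m by simp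
    also have "\<dots> = transpose a b ((\<sigma> ^^ ?L) b)" using m by simp
    finally show ?thesis using Lb by simp
  qed
  have tbL1: "(?\<tau> ^^ (?L + 1)) b = b" using tbL sa by simp
  have perb: "per ?\<tau> b = ?L + 1"
    unfolding per_def[of ?\<tau> b]
  proof (rule Least_equality)
    show "0 < ?L + 1 \<and> (?\<tau> ^^ (?L + 1)) b = b" using tbL1 by simp
  next
    fix k assume k: "0 < k \<and> (?\<tau> ^^ k) b = b"
    show "?L + 1 \<le> k"
    proof (rule ccontr)
      assume "\<not> ?L + 1 \<le> k"
      hence "k < ?L \<or> k = ?L" by auto
      thus False
      proof
        assume "k < ?L"
        thus False using tb_lt[of k] per_least[of k \<sigma> b] k by simp
      next
        assume "k = ?L"
        thus False using tbL k a b by auto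
      qed
    qed
  qed
  have orbt: "orb ?\<tau> b = ?O \<union> {a}"
  proof -
    have "orb ?\<tau> b = (\<lambda>i. (?\<tau> ^^ i) b) ` ({..<?L} \<union> {?L})"
      unfolding orb_def perb by (simp add: lessThan_Suc)
    also have "\<dots> = (\<lambda>i. (\<sigma> ^^ i) b) ` {..<?L} \<union> {a}"
      using tb_lt tbL by (auto simp: image_iff)
    finally show ?thesis unfolding orb_def .
  qed
  have SR: "S = R \<union> ?O" and RO: "R \<inter> ?O = {}" using OS unfolding R_def by auto
  have iSR: "insert a S = R \<union> orb ?\<tau> b" and RO': "R \<inter> orb ?\<tau> b = {}"
    using OS a orbt unfolding R_def by auto
  have finR: "finite R" using fin unfolding R_def by simp
  have c1: "cnt S \<sigma> i = card {x \<in> R. per \<sigma> x = i} + (if i = ?L then ?L else 0)"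
    unfolding cnt_def using card_filter_Un[OF finR finite_orb RO, of "\<lambda>x. per \<sigma> x = i"]
      card_filter_orb[OF inj_s per_s, of b i] SR by simp
  have "{x \<in> R. per ?\<tau> x = i} = {x \<in> R. per \<sigma> x = i}" using perR by auto
  hence c2: "cnt (insert a S) ?\<tau> i = card {x \<in> R. per \<sigma> x = i} + (if i = ?L + 1 then ?L + 1 else 0)"
    unfolding cnt_def using card_filter_Un[OF finR finite_orb RO', of "\<lambda>x. per ?\<tau> x = i"]
      card_filter_orb[OF inj_t per_t, of b i] iSR perb by simp
  show ?thesis using c1 c2 by simp
qed

lemma cnt_insert_fixed:
  assumes fin: "finite S" and sp: "\<sigma> permutes S" and a: "a \<notin> S"
  shows "cnt (insert a S) (transpose a a \<circ> \<sigma>) i = cnt S \<sigma> i + (if i = 1 then 1 else 0)"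
proof -
  have sa: "\<sigma> a = a" using sp a by (simp add: permutes_not_in)
  have pa: "per \<sigma> a = 1" unfolding per_def
    by (rule Least_equality) (use sa in auto)
  have "{x \<in> insert a S. per \<sigma> x = i} = (if i = 1 then insert a {x \<in> S. per \<sigma> x = i} else {x \<in> S. per \<sigma> x = i})"
    using pa by auto
  thus ?thesis unfolding cnt_def using fin a by simp
qed

definition zz :: "nat \<Rightarrow> (nat \<Rightarrow> nat) \<Rightarrow> real" where
  "zz M k = (\<Prod>i=1..M. fact (k i) * real i ^ k i)"

lemma sum_upd:
  fixes g :: "nat \<Rightarrow> nat \<Rightarrow> 'b::comm_monoid_add"
  assumes "finite I" "i0 \<in> I"
  shows "(\<Sum>i\<in>I. g i ((k(i0 := v)) i)) + g i0 (k i0) = (\<Sum>i\<in>I. g i (k i)) + g i0 v"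
proof -
  have "(\<Sum>i\<in>I. g i ((k(i0 := v)) i)) = g i0 v + (\<Sum>i\<in>I - {i0}. g i ((k(i0 := v)) i))"
    using sum.remove[OF assms, of "\<lambda>i. g i ((k(i0 := v)) i)"] by simp
  moreover have "(\<Sum>i\<in>I. g i (k i)) = g i0 (k i0) + (\<Sum>i\<in>I - {i0}. g i (k i))"
    using sum.remove[OF assms, of "\<lambda>i. g i (k i)"] by simp
  moreover have "(\<Sum>i\<in>I - {i0}. g i ((k(i0 := v)) i)) = (\<Sum>i\<in>I - {i0}. g i (k i))"
    by (rule sum.cong) auto
  ultimately show ?thesis by (simp add: ac_simps)
qed

lemma prod_upd:
  fixes g :: "nat \<Rightarrow> nat \<Rightarrow> 'b::comm_monoid_mult"
  assumes "finite I" "i0 \<in> I"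
  shows "(\<Prod>i\<in>I. g i ((k(i0 := v)) i)) * g i0 (k i0) = (\<Prod>i\<in>I. g i (k i)) * g i0 v"
proof -
  have "(\<Prod>i\<in>I. g i ((k(i0 := v)) i)) = g i0 v * (\<Prod>i\<in>I - {i0}. g i ((k(i0 := v)) i))"
    using prod.remove[OF assms, of "\<lambda>i. g i ((k(i0 := v)) i)"] by simp
  moreover have "(\<Prod>i\<in>I. g i (k i)) = g i0 (k i0) * (\<Prod>i\<in>I - {i0}. g i (k i))"
    using prod.remove[OF assms, of "\<lambda>i. g i (k i)"] by simp
  moreover have "(\<Prod>i\<in>I - {i0}. g i ((k(i0 := v)) i)) = (\<Prod>i\<in>I - {i0}. g i (k i))"
    by (rule prod.cong) auto
  ultimately show ?thesis by (simp add: ac_simps)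
qed

lemma zz_upd:
  assumes "i0 \<in> {1..M}"
  shows "zz M (k(i0 := v)) * (fact (k i0) * real i0 ^ k i0) = zz M k * (fact v * real i0 ^ v)"
  unfolding zz_def using prod_upd[of "{1..M}" i0 "\<lambda>i x. fact x * real i ^ x" k v] assms by simp

lemma zz_pos: "0 < zz M k"
  unfolding zz_def by (intro prod_pos) auto

lemma zz_ext:
  assumes "\<And>i. M < i \<Longrightarrow> k i = 0" "M \<le> M'"
  shows "zz M' k = zz M k"
  unfolding zz_def
  by (rule prod.mono_neutral_right) (use assms in auto)

lemma part_support:
  assumes "k \<in> partitions_mult n" "k i \<noteq> 0"
  shows "1 \<le> i" "i \<le> n"
  using assms unfolding partitions_mult_def by auto

lemma part_sum:
  assumes "k \<in> partitions_mult n"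
  shows "(\<Sum>i=1..n. i * k i) = n"
  using assms unfolding partitions_mult_def by auto

lemma part_sub1:
  assumes "k \<in> partitions_mult (Suc n)" "1 \<le> k 1"
  shows "k(1 := k 1 - 1) \<in> partitions_mult n"
proof -
  let ?k = "k(1 := k 1 - 1)"
  have s: "(\<Sum>i=1..Suc n. i * ?k i) + 1 * k 1 = (\<Sum>i=1..Suc n. i * k i) + 1 * (k 1 - 1)"
    using sum_upd[of "{1..Suc n}" 1 "\<lambda>i x. i * x" k "k 1 - 1"] by simp
  hence s2: "(\<Sum>i=1..Suc n. i * ?k i) = n" using part_sum[OF assms(1)] assms(2) by simp
  have "Suc n * ?k (Suc n) \<le> (\<Sum>i=1..Suc n. i * ?k i)"
    by (rule member_le_sum) auto
  hence z: "?k (Suc n) = 0" using s2 by (cases "?k (Suc n)") auto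
  have supp: "?k i \<noteq> 0 \<Longrightarrow> 1 \<le> i \<and> i \<le> n" for i
    using part_support[OF assms(1), of i] z by (cases "i = Suc n"; cases "i = 1") auto
  have "(\<Sum>i=1..Suc n. i * ?k i) = (\<Sum>i=1..n. i * ?k i) + Suc n * ?k (Suc n)"
    by simp
  hence "(\<Sum>i=1..n. i * ?k i) = n" using s2 z by simp
  thus ?thesis unfolding partitions_mult_def using supp by blast
qed

definition kl :: "(nat \<Rightarrow> nat) \<Rightarrow> nat \<Rightarrow> nat \<Rightarrow> nat" where
  "kl k l = (k(l := k l + 1))(l + 1 := k (l + 1) - 1)"

lemma part_kl:
  assumes "k \<in> partitions_mult (Suc n)" "1 \<le> l" "1 \<le> k (l + 1)"
  shows "kl k l \<in> partitions_mult n" "l \<le> n"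
proof -
  let ?k1 = "k(l := k l + 1)"
  have ln: "l + 1 \<le> Suc n" using part_support[of k "Suc n" "l+1"] assms by simp
  thus "l \<le> n" by simp
  have s1: "(\<Sum>i=1..Suc n. i * ?k1 i) + l * k l = (\<Sum>i=1..Suc n. i * k i) + l * (k l + 1)"
    using sum_upd[of "{1..Suc n}" l "\<lambda>i x. i * x" k "k l + 1"] assms(2) ln by simp
  have s2: "(\<Sum>i=1..Suc n. i * kl k l i) + (l + 1) * ?k1 (l + 1) = (\<Sum>i=1..Suc n. i * ?k1 i) + (l + 1) * (?k1 (l + 1) - 1)"
    using sum_upd[of "{1..Suc n}" "l + 1" "\<lambda>i x. i * x" ?k1 "k (l + 1) - 1"] ln unfolding kl_def by simp
  have k1l: "?k1 (l + 1) = k (l + 1)" by simp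
  have "(l + 1) * k (l + 1) = (l + 1) * (k (l + 1) - 1) + (l + 1)"
    using assms(3) by (cases "k (l+1)") auto
  hence s3: "(\<Sum>i=1..Suc n. i * kl k l i) = n"
    using s1 s2 part_sum[OF assms(1)] k1l by (simp add: algebra_simps)
  have "Suc n * kl k l (Suc n) \<le> (\<Sum>i=1..Suc n. i * kl k l i)"
    by (rule member_le_sum) auto
  hence z: "kl k l (Suc n) = 0" using s3 by (cases "kl k l (Suc n)") auto
  have supp: "kl k l i \<noteq> 0 \<Longrightarrow> 1 \<le> i \<and> i \<le> n" for i
  proof -
    assume h: "kl k l i \<noteq> 0"
    have "1 \<le> i \<and> i \<le> Suc n"
    proof (cases "i = l \<or> i = l + 1")
      case True then show ?thesis using assms(2) ln by auto
    next
      case False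
      hence "kl k l i = k i" unfolding kl_def by simp
      thus ?thesis using part_support[OF assms(1), of i] h by simp
    qed
    thus ?thesis using z h by (cases "i = Suc n") auto
  qed
  have "(\<Sum>i=1..Suc n. i * kl k l i) = (\<Sum>i=1..n. i * kl k l i) + Suc n * kl k l (Suc n)"
    by simp
  hence "(\<Sum>i=1..n. i * kl k l i) = n" using s3 z by simp
  thus "kl k l \<in> partitions_mult n" unfolding partitions_mult_def using supp by blast
qed

lemma zz_sub1:
  assumes "1 \<le> k 1" and that: "1 \<le> M"
  shows "zz M (k(1 := k 1 - 1)) * real (k 1) = zz M k"
proof -
  have "zz M (k(1 := k 1 - 1)) * (fact (k 1) * real 1 ^ k 1) = zz M k * (fact (k 1 - 1) * real 1 ^ (k 1 - 1))"
    by (rule zz_upd) (use that in auto)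
  moreover obtain K where K: "k 1 = Suc K" using assms by (cases "k 1") auto
  hence "(fact (k 1) :: real) = real (k 1) * fact (k 1 - 1)" by simp
  ultimately show ?thesis using fact_gt_zero[where 'a=real, of "k 1 - 1"] by simp
qed

lemma zz_kl:
  assumes "1 \<le> l" "l + 1 \<le> M" "1 \<le> k (l + 1)"
  shows "zz M (kl k l) * (real (k (l + 1)) * real (l + 1)) = zz M k * (real (k l + 1) * real l)"
proof -
  let ?k1 = "k(l := k l + 1)"
  have a: "zz M ?k1 * (fact (k l) * real l ^ k l) = zz M k * (fact (k l + 1) * real l ^ (k l + 1))"
    by (rule zz_upd) (use assms in auto)
  have "zz M (kl k l) * (fact (?k1 (l+1)) * real (l+1) ^ ?k1 (l+1))
        = zz M ?k1 * (fact (k (l+1) - 1) * real (l+1) ^ (k (l+1) - 1))"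
    unfolding kl_def by (rule zz_upd) (use assms in auto)
  hence b: "zz M (kl k l) * (fact (k (l+1)) * real (l+1) ^ k (l+1))
        = zz M ?k1 * (fact (k (l+1) - 1) * real (l+1) ^ (k (l+1) - 1))" by simp
  obtain K where K: "k (l+1) = Suc K" using assms(3) by (cases "k (l+1)") auto
  have pos1: "0 < (fact (k l) * real l ^ k l :: real)" using assms by simp
  have pos2: "0 < (fact K * real (l+1) ^ K :: real)" by simp
  have e1: "(fact (k l + 1) * real l ^ (k l + 1) :: real) = (fact (k l) * real l ^ k l) * (real (k l + 1) * real l)"
    by (simp add: algebra_simps)
  have a': "zz M ?k1 = zz M k * (real (k l + 1) * real l)"
  proof -
    have "zz M ?k1 * (fact (k l) * real l ^ k l) = (zz M k * (real (k l + 1) * real l)) * (fact (k l) * real l ^ k l)"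
      using a e1 by (simp add: ac_simps)
    thus ?thesis using pos1 assms(1) by simp
  qed
  have e2: "(fact (Suc K) * real (l+1) ^ Suc K :: real) = (fact K * real (l+1) ^ K) * (real (Suc K) * real (l+1))"
    by (simp add: algebra_simps)
  have b': "zz M (kl k l) * (real (Suc K) * real (l+1)) = zz M ?k1"
  proof -
    have "(zz M (kl k l) * (real (Suc K) * real (l+1))) * (fact K * real (l+1) ^ K) = zz M ?k1 * (fact K * real (l+1) ^ K)"
      using b e2 unfolding K by (simp add: ac_simps)
    thus ?thesis using pos2 by simp
  qed
  show ?thesis using a' b' K by simp
qed

lemma permutes_insert_decomp:
  assumes "\<sigma>' permutes insert a S"
  obtains b \<sigma> where "b \<in> insert a S" "\<sigma> permutes S" "\<sigma>' = transpose a b \<circ> \<sigma>"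
proof -
  have "\<sigma>' \<in> {p. p permutes insert a S}" using assms by simp
  then show ?thesis using that unfolding permutes_insert by auto
qed

lemma cnt_dvd:
  assumes "finite S" "\<sigma> permutes S"
  shows "i dvd cnt S \<sigma> i"
  using assms
proof (induction S arbitrary: \<sigma> i rule: finite_induct)
  case empty
  then show ?case by (simp add: cnt_def)
next
  case (insert a S)
  obtain b \<sigma>0 where b: "b \<in> insert a S" and s0: "\<sigma>0 permutes S" and e: "\<sigma> = transpose a b \<circ> \<sigma>0"
    using permutes_insert_decomp[OF insert.prems] .
  show ?case
  proof (cases "b = a")
    case True
    then show ?thesis using cnt_insert_fixed[OF insert.hyps(1) s0 insert.hyps(2), of i] e insert.IH[OF s0, of i]
      by (cases "i = 1") auto
  next
    case False
    hence bS: "b \<in> S" using b by simp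
    let ?l = "per \<sigma>0 b"
    have l0: "0 < ?l" using per_props(1)[OF permutes_periodic[OF insert.hyps(1) s0]] .
    have tr: "cnt S \<sigma>0 i + (if i = ?l + 1 then ?l + 1 else 0) = cnt (insert a S) \<sigma> i + (if i = ?l then ?l else 0)"
      using cnt_transp[OF insert.hyps(1) s0 insert.hyps(2) bS, of i] e by simp
    have ih: "i dvd cnt S \<sigma>0 i" by (rule insert.IH[OF s0])
    show ?thesis
    proof (cases "i = ?l")
      case True
      hence "cnt S \<sigma>0 i = cnt (insert a S) \<sigma> i + i" using tr by simp
      thus ?thesis using ih by (simp add: dvd_add_left_iff)
    next
      case False
      show ?thesis
      proof (cases "i = ?l + 1")
        case True
        hence "cnt (insert a S) \<sigma> i = cnt S \<sigma>0 i + i" using tr False by simp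
        thus ?thesis using ih by simp
      next
        case False2: False
        thus ?thesis using tr ih False by simp
      qed
    qed
  qed
qed

lemma per_range:
  assumes "finite S" "\<sigma> permutes S" "x \<in> S"
  shows "per \<sigma> x \<in> {1..card S}"
proof -
  have p: "periodic \<sigma> x" by (rule permutes_periodic[OF assms(1,2)])
  have "per \<sigma> x \<le> card S"
    by (rule per_le_card[OF assms(1) _ assms(3) p]) (use permutes_in_image[OF assms(2)] in auto)
  thus ?thesis using per_props(1)[OF p] by auto
qed

lemma cnt_zero:
  assumes "finite S" "\<sigma> permutes S" "i \<notin> {1..card S}"
  shows "cnt S \<sigma> i = 0"
proof -
  have "{x \<in> S. per \<sigma> x = i} = {}" using per_range[OF assms(1,2)] assms(3) by fastforce
  thus ?thesis unfolding cnt_def by (metis card.empty)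
qed

lemma cnt_sum:
  assumes "finite S" "\<sigma> permutes S"
  shows "(\<Sum>i=1..card S. cnt S \<sigma> i) = card S"
proof -
  have "(\<Sum>i\<in>{1..card S}. sum (\<lambda>_. 1::nat) {x \<in> S. per \<sigma> x = i}) = sum (\<lambda>_. 1) S"
    by (rule sum.group) (use assms per_range[OF assms] in auto)
  thus ?thesis unfolding cnt_def by simp
qed

definition ct :: "'a set \<Rightarrow> ('a \<Rightarrow> 'a) \<Rightarrow> nat \<Rightarrow> nat" where
  "ct S \<sigma> i = cnt S \<sigma> i div i"

lemma ct_part:
  assumes "finite S" "\<sigma> permutes S"
  shows "ct S \<sigma> \<in> partitions_mult (card S)"
proof -
  have A: "\<forall>i. ct S \<sigma> i \<noteq> 0 \<longrightarrow> 1 \<le> i \<and> i \<le> card S"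
  proof (intro allI impI)
    fix i assume "ct S \<sigma> i \<noteq> 0"
    hence "cnt S \<sigma> i \<noteq> 0" unfolding ct_def by (metis div_0)
    thus "1 \<le> i \<and> i \<le> card S" using cnt_zero[OF assms, of i] by auto
  qed
  have "(\<Sum>i=1..card S. i * ct S \<sigma> i) = (\<Sum>i=1..card S. cnt S \<sigma> i)"
    by (rule sum.cong) (use cnt_dvd[OF assms] in \<open>auto simp: ct_def\<close>)
  hence "(\<Sum>i=1..card S. i * ct S \<sigma> i) = card S" using cnt_sum[OF assms] by simp
  thus ?thesis using A unfolding partitions_mult_def by blast
qed

lemma ct_eq_iff:
  assumes "finite S" "\<sigma> permutes S" "k \<in> partitions_mult n"
  shows "ct S \<sigma> = k \<longleftrightarrow> (\<forall>i. cnt S \<sigma> i = i * k i)"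
proof
  assume h: "ct S \<sigma> = k"
  show "\<forall>i. cnt S \<sigma> i = i * k i"
  proof
    fix i
    have "i dvd cnt S \<sigma> i" by (rule cnt_dvd[OF assms(1,2)])
    thus "cnt S \<sigma> i = i * k i" using h unfolding ct_def by (metis dvd_mult_div_cancel)
  qed
next
  assume h: "\<forall>i. cnt S \<sigma> i = i * k i"
  have k0: "k 0 = 0" using assms(3) unfolding partitions_mult_def by auto
  show "ct S \<sigma> = k"
  proof
    fix i show "ct S \<sigma> i = k i" using h k0 unfolding ct_def by (cases "i = 0") auto
  qed
qed

definition type_set :: "'a set \<Rightarrow> (nat \<Rightarrow> nat) \<Rightarrow> ('a \<Rightarrow> 'a) set" where
  "type_set S k = {\<sigma>. \<sigma> permutes S \<and> (\<forall>i. cnt S \<sigma> i = i * k i)}"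

lemma cond1:
  fixes c k :: "nat \<Rightarrow> nat"
  shows "(\<forall>i. c i + (if i = 1 then 1 else 0) = i * k i) \<longleftrightarrow> (1 \<le> k 1 \<and> (\<forall>i. c i = i * (k(1 := k 1 - 1)) i))"
proof
  assume H: "\<forall>i. c i + (if i = 1 then 1 else 0) = i * k i"
  have k1: "1 \<le> k 1" using H[rule_format, of 1] by simp
  show "1 \<le> k 1 \<and> (\<forall>i. c i = i * (k(1 := k 1 - 1)) i)"
  proof (intro conjI allI k1)
    fix i show "c i = i * (k(1 := k 1 - 1)) i" using H[rule_format, of i] k1 by (cases "i = 1") auto
  qed
next
  assume H: "1 \<le> k 1 \<and> (\<forall>i. c i = i * (k(1 := k 1 - 1)) i)"
  show "\<forall>i. c i + (if i = 1 then 1 else 0) = i * k i"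
  proof
    fix i show "c i + (if i = 1 then 1 else 0) = i * k i" using H by (cases "i = 1") auto
  qed
qed

lemma cond_equiv:
  fixes c c' k :: "nat \<Rightarrow> nat"
  assumes H0: "\<And>i. c i + (if i = l + 1 then l + 1 else 0) = c' i + (if i = l then l else 0)" and l1: "1 \<le> l"
  shows "(\<forall>i. c' i = i * k i) \<longleftrightarrow> (1 \<le> k (l + 1) \<and> (\<forall>i. c i = i * kl k l i))"
proof
  assume H: "\<forall>i. c' i = i * k i"
  have e: "c (l + 1) + (l + 1) = (l + 1) * k (l + 1)" using H0[of "l+1"] H by simp
  hence K: "1 \<le> k (l + 1)" by (cases "k (l+1)") auto
  then obtain K where K': "k (l + 1) = Suc K" by (cases "k (l+1)") auto
  show "1 \<le> k (l + 1) \<and> (\<forall>i. c i = i * kl k l i)"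
  proof (intro conjI allI K)
    fix i
    consider "i = l" | "i = l + 1" | "i \<noteq> l \<and> i \<noteq> l + 1" by blast
    then show "c i = i * kl k l i"
    proof cases
      case 1 then show ?thesis using H0[of l] H unfolding kl_def by simp
    next
      case 2 then show ?thesis using e K' unfolding kl_def by simp
    next
      case 3 then show ?thesis using H0[of i] H unfolding kl_def by simp
    qed
  qed
next
  assume H: "1 \<le> k (l + 1) \<and> (\<forall>i. c i = i * kl k l i)"
  then obtain K where K': "k (l + 1) = Suc K" by (cases "k (l+1)") auto
  show "\<forall>i. c' i = i * k i"
  proof
    fix i
    consider "i = l" | "i = l + 1" | "i \<noteq> l \<and> i \<noteq> l + 1" by blast
    then show "c' i = i * k i"
    proof cases
      case 1 then show ?thesis using H0[of l] H unfolding kl_def by simp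
    next
      case 2 then show ?thesis using H0[of "l+1"] H K' unfolding kl_def by simp
    next
      case 3 then show ?thesis using H0[of i] H unfolding kl_def by simp
    qed
  qed
qed

lemma transp_inj:
  assumes "a \<notin> S"
  shows "inj_on (\<lambda>(b, p). transpose a b \<circ> p) (SIGMA b:insert a S. {p. p permutes S \<and> Q b p})"
proof (rule inj_onI, clarsimp)
  fix b p c q
  assume pF: "p permutes S" and qF: "q permutes S" and eq: "transpose a b \<circ> p = transpose a c \<circ> q"
  have pa: "p a = a" using pF assms by (simp add: permutes_not_in)
  have qa: "q a = a" using qF assms by (simp add: permutes_not_in)
  have "b = (transpose a b \<circ> p) a" using pa by simp
  also have "\<dots> = (transpose a c \<circ> q) a" using eq by simp
  also have "\<dots> = c" using qa by simp
  finally have bc: "b = c" .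
  hence "transpose a b \<circ> (transpose a b \<circ> p) = transpose a b \<circ> (transpose a b \<circ> q)" using eq by simp
  hence "p = q" by (simp add: o_assoc)
  with bc show "b = c \<and> p = q" by simp
qed

lemma part_zero:
  assumes "k \<in> partitions_mult n" "n < i"
  shows "k i = 0"
  using part_support(2)[OF assms(1), of i] assms(2) by (cases "k i = 0") auto

lemma count_type:
  assumes "finite S"
  shows "\<forall>k \<in> partitions_mult (card S). real (card (type_set S k)) = fact (card S) / zz (card S) k"
  using assms
proof (induction S rule: finite_induct)
  case empty
  show ?case
  proof
    fix k assume "k \<in> partitions_mult (card ({} :: 'a set))"
    hence k0: "k = (\<lambda>_. 0)" unfolding partitions_mult_def by (auto simp: fun_eq_iff)
    have "type_set ({} :: 'a set) k = {id}" unfolding type_set_def cnt_def k0 by auto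
    thus "real (card (type_set ({} :: 'a set) k)) = fact (card ({} :: 'a set)) / zz (card ({} :: 'a set)) k"
      by (simp add: zz_def)
  qed
next
  case (insert a S)
  let ?n = "card S"
  have cS: "card (insert a S) = Suc ?n" using insert.hyps by simp
  show ?case
  proof
    fix k assume "k \<in> partitions_mult (card (insert a S))"
    hence kp: "k \<in> partitions_mult (Suc ?n)" using cS by simp
    let ?Z = "zz (Suc ?n) k"
    have Zpos: "0 < ?Z" by (rule zz_pos)
    define P where "P = {\<sigma>. \<sigma> permutes S}"
    have finP: "finite P" unfolding P_def using finite_permutations[OF insert.hyps(1)] .
    define T where "T b = {\<sigma>. \<sigma> permutes S \<and> (\<forall>i. cnt (insert a S) (transpose a b \<circ> \<sigma>) i = i * k i)}" for b
    have finT: "finite (T b)" for b using finP unfolding T_def P_def by (rule rev_finite_subset) auto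
    have TS: "type_set (insert a S) k = (\<lambda>(b, p). transpose a b \<circ> p) ` (SIGMA b:insert a S. T b)"
    proof
      show "type_set (insert a S) k \<subseteq> (\<lambda>(b, p). transpose a b \<circ> p) ` (SIGMA b:insert a S. T b)"
      proof
        fix \<sigma>' assume h: "\<sigma>' \<in> type_set (insert a S) k"
        hence "\<sigma>' permutes insert a S" unfolding type_set_def by simp
        then obtain b \<sigma> where "b \<in> insert a S" "\<sigma> permutes S" "\<sigma>' = transpose a b \<circ> \<sigma>"
          by (rule permutes_insert_decomp)
        thus "\<sigma>' \<in> (\<lambda>(b, p). transpose a b \<circ> p) ` (SIGMA b:insert a S. T b)"
          using h unfolding type_set_def T_def by (auto simp: image_iff)
      qed
    next
      show "(\<lambda>(b, p). transpose a b \<circ> p) ` (SIGMA b:insert a S. T b) \<subseteq> type_set (insert a S) k"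
      proof
        fix x assume "x \<in> (\<lambda>(b, p). transpose a b \<circ> p) ` (SIGMA b:insert a S. T b)"
        then obtain b \<sigma> where b: "b \<in> insert a S" and s: "\<sigma> \<in> T b" and x: "x = transpose a b \<circ> \<sigma>" by auto
        have "\<sigma> permutes insert a S" using s unfolding T_def by (auto intro: permutes_subset)
        hence "transpose a b \<circ> \<sigma> permutes insert a S"
          by (rule permutes_compose) (rule permutes_swap_id, use b in auto)
        thus "x \<in> type_set (insert a S) k" using s x unfolding T_def type_set_def by simp
      qed
    qed
    have injg: "inj_on (\<lambda>(b, p). transpose a b \<circ> p) (SIGMA b:insert a S. T b)"
      unfolding T_def by (rule transp_inj[OF insert.hyps(2)])
    have c1: "card (type_set (insert a S) k) = (\<Sum>b\<in>insert a S. card (T b))"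
      unfolding TS card_image[OF injg] using insert.hyps(1) finT by (simp add: card_SigmaI)
    also have "\<dots> = card (T a) + (\<Sum>b\<in>S. card (T b))"
      using insert.hyps by simp
    finally have c2: "card (type_set (insert a S) k) = card (T a) + (\<Sum>b\<in>S. card (T b))" .
    have Ta: "T a = (if 1 \<le> k 1 then type_set S (k(1 := k 1 - 1)) else {})"
    proof -
      have "T a = {\<sigma>. \<sigma> permutes S \<and> (1 \<le> k 1 \<and> (\<forall>i. cnt S \<sigma> i = i * (k(1 := k 1 - 1)) i))}"
        unfolding T_def using cnt_insert_fixed[OF insert.hyps(1) _ insert.hyps(2)] cond1 by auto
      thus ?thesis unfolding type_set_def by auto
    qed
    have rTa: "real (card (T a)) = fact ?n * real (k 1) / ?Z"
    proof (cases "1 \<le> k 1")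
      case True
      let ?k1 = "k(1 := k 1 - 1)"
      have kp1: "?k1 \<in> partitions_mult ?n" by (rule part_sub1[OF kp True])
      have Ta': "T a = type_set S ?k1" using Ta True by simp
      have "real (card (T a)) = fact ?n / zz ?n ?k1" unfolding Ta' using insert.IH kp1 by blast
      also have "zz ?n ?k1 = zz (Suc ?n) ?k1"
        by (rule zz_ext[symmetric]) (erule part_zero[OF kp1], simp)
      also have "zz (Suc ?n) ?k1 = ?Z / real (k 1)"
        using zz_sub1[of k "Suc ?n"] True by (simp add: field_simps)
      finally show ?thesis using True Zpos by (simp add: field_simps)
    next
      case False
      then show ?thesis using Ta by simp
    qed
    define R where "R \<sigma> l = (1 \<le> k (l + 1) \<and> (\<forall>i. cnt S \<sigma> i = i * kl k l i))" for \<sigma> l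
    have Tb: "T b = {\<sigma> \<in> P. R \<sigma> (per \<sigma> b)}" if b: "b \<in> S" for b
    proof -
      have "(\<forall>i. cnt (insert a S) (transpose a b \<circ> \<sigma>) i = i * k i) \<longleftrightarrow> R \<sigma> (per \<sigma> b)"
        if s: "\<sigma> permutes S" for \<sigma>
        unfolding R_def
        by (rule cond_equiv[OF cnt_transp[OF insert.hyps(1) s insert.hyps(2) b]])
           (use per_props(1)[OF permutes_periodic[OF insert.hyps(1) s], of b] in simp)
      thus ?thesis unfolding T_def P_def by auto
    qed
    have "(\<Sum>b\<in>S. card (T b)) = (\<Sum>b\<in>S. \<Sum>\<sigma>\<in>P. if R \<sigma> (per \<sigma> b) then 1 else 0)"
      by (rule sum.cong) (use Tb finP in \<open>auto simp: sum.inter_filter[symmetric]\<close>)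
    also have "\<dots> = (\<Sum>\<sigma>\<in>P. \<Sum>b\<in>S. if R \<sigma> (per \<sigma> b) then 1 else 0)"
      by (rule sum.swap)
    also have "\<dots> = (\<Sum>\<sigma>\<in>P. \<Sum>l\<in>{1..?n}. if R \<sigma> l then cnt S \<sigma> l else 0)"
    proof (rule sum.cong[OF refl])
      fix \<sigma> assume "\<sigma> \<in> P"
      hence s: "\<sigma> permutes S" unfolding P_def by simp
      have "(\<Sum>b\<in>S. if R \<sigma> (per \<sigma> b) then 1 else 0) =
            (\<Sum>l\<in>{1..?n}. \<Sum>b\<in>{x \<in> S. per \<sigma> x = l}. if R \<sigma> (per \<sigma> b) then 1 else (0::nat))"
        by (rule sum.group[symmetric]) (use insert.hyps(1) per_range[OF insert.hyps(1) s] in auto)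
      also have "\<dots> = (\<Sum>l\<in>{1..?n}. if R \<sigma> l then cnt S \<sigma> l else 0)"
        by (rule sum.cong[OF refl]) (auto simp: cnt_def)
      finally show "(\<Sum>b\<in>S. if R \<sigma> (per \<sigma> b) then 1 else 0) = (\<Sum>l\<in>{1..?n}. if R \<sigma> l then cnt S \<sigma> l else 0)" .
    qed
    also have "\<dots> = (\<Sum>l\<in>{1..?n}. \<Sum>\<sigma>\<in>P. if R \<sigma> l then cnt S \<sigma> l else 0)"
      by (rule sum.swap)
    also have "\<dots> = (\<Sum>l\<in>{1..?n}. if 1 \<le> k (l + 1) then card (type_set S (kl k l)) * (l * (k l + 1)) else 0)"
    proof (rule sum.cong[OF refl])
      fix l assume l: "l \<in> {1..?n}"
      show "(\<Sum>\<sigma>\<in>P. if R \<sigma> l then cnt S \<sigma> l else 0) =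
            (if 1 \<le> k (l + 1) then card (type_set S (kl k l)) * (l * (k l + 1)) else 0)"
      proof (cases "1 \<le> k (l + 1)")
        case True
        have klv: "kl k l l = k l + 1" unfolding kl_def by simp
        have "(\<Sum>\<sigma>\<in>P. if R \<sigma> l then cnt S \<sigma> l else 0) = (\<Sum>\<sigma>\<in>P. if R \<sigma> l then l * (k l + 1) else 0)"
          by (rule sum.cong[OF refl]) (auto simp: R_def klv)
        also have "\<dots> = (\<Sum>\<sigma>\<in>{\<sigma>\<in>P. R \<sigma> l}. l * (k l + 1))"
          using sum.inter_filter[OF finP, of "\<lambda>_. l * (k l + 1)" "\<lambda>\<sigma>. R \<sigma> l"] by simp
        also have "{\<sigma>\<in>P. R \<sigma> l} = type_set S (kl k l)"
          unfolding R_def P_def type_set_def using True by auto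
        finally show ?thesis using True by simp
      next
        case False
        then show ?thesis by (simp add: R_def)
      qed
    qed
    finally have c3: "(\<Sum>b\<in>S. card (T b)) =
        (\<Sum>l\<in>{1..?n}. if 1 \<le> k (l + 1) then card (type_set S (kl k l)) * (l * (k l + 1)) else 0)" .
    have termeq: "real (if 1 \<le> k (l + 1) then card (type_set S (kl k l)) * (l * (k l + 1)) else 0)
          = fact ?n * real ((l + 1) * k (l + 1)) / ?Z" if l: "l \<in> {1..?n}" for l
    proof (cases "1 \<le> k (l + 1)")
      case True
      have l1: "1 \<le> l" using l by simp
      have kp2: "kl k l \<in> partitions_mult ?n" by (rule part_kl(1)[OF kp l1 True])
      have "real (card (type_set S (kl k l))) = fact ?n / zz ?n (kl k l)" using insert.IH kp2 by blast
      also have "zz ?n (kl k l) = zz (Suc ?n) (kl k l)"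
        by (rule zz_ext[symmetric]) (erule part_zero[OF kp2], simp)
      finally have e1: "real (card (type_set S (kl k l))) = fact ?n / zz (Suc ?n) (kl k l)" .
      have e2: "zz (Suc ?n) (kl k l) * (real (k (l + 1)) * real (l + 1)) = ?Z * (real (k l + 1) * real l)"
        by (rule zz_kl) (use l True in auto)
      have zp: "0 < zz (Suc ?n) (kl k l)" by (rule zz_pos)
      have "real (card (type_set S (kl k l)) * (l * (k l + 1))) = fact ?n * (real (k l + 1) * real l) / zz (Suc ?n) (kl k l)"
        using e1 by (simp add: add_divide_distrib algebra_simps)
      also have "\<dots> = fact ?n * (real (k (l + 1)) * real (l + 1)) / ?Z"
      proof -
        have X: "real (k l + 1) * real l = zz (Suc ?n) (kl k l) * (real (k (l + 1)) * real (l + 1)) / ?Z"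
          using e2 Zpos by (simp add: eq_divide_eq)
        show ?thesis unfolding X using zp by simp
      qed
      finally show ?thesis using True by (simp add: algebra_simps)
    next
      case False
      then have "k (l + 1) = 0" by simp
      then show ?thesis by simp
    qed
    have sum_shift: "(\<Sum>l\<in>{1..?n}. (l + 1) * k (l + 1)) + k 1 = Suc ?n"
    proof -
      have "(\<Sum>l\<in>{1..?n}. (l + 1) * k (l + 1)) = (\<Sum>i\<in>{Suc 1..Suc ?n}. i * k i)"
        using sum.shift_bounds_cl_Suc_ivl[of "\<lambda>i. i * k i" 1 ?n] by simp
      moreover have "(\<Sum>i\<in>{1..Suc ?n}. i * k i) = 1 * k 1 + (\<Sum>i\<in>{Suc 1..Suc ?n}. i * k i)"
        by (rule sum.atLeast_Suc_atMost) simp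
      ultimately show ?thesis using part_sum[OF kp] by simp
    qed
    have "real (card (type_set (insert a S) k)) = real (card (T a)) + real (\<Sum>b\<in>S. card (T b))"
      using c2 by simp
    also have "real (\<Sum>b\<in>S. card (T b)) = (\<Sum>l\<in>{1..?n}. fact ?n * real ((l + 1) * k (l + 1)) / ?Z)"
      unfolding c3 of_nat_sum using termeq by (rule sum.cong[OF refl])
    also have "\<dots> = fact ?n / ?Z * real (\<Sum>l\<in>{1..?n}. (l + 1) * k (l + 1))"
      by (simp add: sum_distrib_left sum_divide_distrib)
    finally have "real (card (type_set (insert a S) k)) = fact ?n / ?Z * (real (k 1) + real (\<Sum>l\<in>{1..?n}. (l + 1) * k (l + 1)))"
      using rTa by (simp add: field_simps add_divide_distrib)
    also have "real (k 1) + real (\<Sum>l\<in>{1..?n}. (l + 1) * k (l + 1)) = real (Suc ?n)"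
      using sum_shift by (metis add.commute of_nat_add)
    finally show "real (card (type_set (insert a S) k)) = fact (card (insert a S)) / zz (card (insert a S)) k"
      using cS by (simp add: field_simps)
  qed
qed

lemma finite_partitions: "finite (partitions_mult n)"
proof (rule finite_subset)
  show "partitions_mult n \<subseteq> {f. \<forall>x. (x \<in> {1..n} \<longrightarrow> f x \<in> {0..n}) \<and> (x \<notin> {1..n} \<longrightarrow> f x = 0)}"
  proof
    fix k assume k: "k \<in> partitions_mult n"
    have "\<forall>x. (x \<in> {1..n} \<longrightarrow> k x \<in> {0..n}) \<and> (x \<notin> {1..n} \<longrightarrow> k x = 0)"
    proof (intro allI conjI impI)
      fix x assume hx: "x \<in> {1..n}"
      have "x * k x \<le> (\<Sum>i=1..n. i * k i)" by (rule member_le_sum) (use hx in auto)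
      hence A: "x * k x \<le> n" using part_sum[OF k] by simp
      have B: "1 * k x \<le> x * k x" by (rule mult_le_mono1) (use hx in simp)
      have "k x \<le> n" using A B by linarith
      thus "k x \<in> {0..n}" by simp
    next
      fix x assume "x \<notin> {1..n}"
      thus "k x = 0" using part_support[OF k, of x] by (cases "k x = 0") auto
    qed
    thus "k \<in> {f. \<forall>x. (x \<in> {1..n} \<longrightarrow> f x \<in> {0..n}) \<and> (x \<notin> {1..n} \<longrightarrow> f x = 0)}" by simp
  qed
  show "finite {f. \<forall>x. (x \<in> {1..n} \<longrightarrow> f x \<in> {0..n}) \<and> (x \<notin> {1..n} \<longrightarrow> f x = (0::nat))}"
    by (rule finite_set_of_finite_funs) auto
qed

lemma sum_over_perms:
  fixes F :: "(nat \<Rightarrow> nat) \<Rightarrow> real"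
  assumes "finite S"
  shows "(\<Sum>\<sigma>\<in>{\<sigma>. \<sigma> permutes S}. F (ct S \<sigma>)) =
         (\<Sum>k\<in>partitions_mult (card S). fact (card S) / zz (card S) k * F k)"
proof -
  let ?P = "{\<sigma>. \<sigma> permutes S}"
  have finP: "finite ?P" using finite_permutations[OF assms] .
  have "(\<Sum>\<sigma>\<in>?P. F (ct S \<sigma>)) = (\<Sum>k\<in>partitions_mult (card S). \<Sum>\<sigma>\<in>{\<sigma> \<in> ?P. ct S \<sigma> = k}. F (ct S \<sigma>))"
    by (rule sum.group[symmetric]) (use finP finite_partitions ct_part[OF assms] in auto)
  also have "\<dots> = (\<Sum>k\<in>partitions_mult (card S). real (card (type_set S k)) * F k)"
  proof (rule sum.cong[OF refl])
    fix k assume k: "k \<in> partitions_mult (card S)"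
    have "{\<sigma> \<in> ?P. ct S \<sigma> = k} = type_set S k"
      unfolding type_set_def using ct_eq_iff[OF assms _ k] by auto
    moreover have "(\<Sum>\<sigma>\<in>{\<sigma> \<in> ?P. ct S \<sigma> = k}. F (ct S \<sigma>)) = (\<Sum>\<sigma>\<in>{\<sigma> \<in> ?P. ct S \<sigma> = k}. F k)"
      by (rule sum.cong) auto
    ultimately show "(\<Sum>\<sigma>\<in>{\<sigma> \<in> ?P. ct S \<sigma> = k}. F (ct S \<sigma>)) = real (card (type_set S k)) * F k"
      by simp
  qed
  also have "\<dots> = (\<Sum>k\<in>partitions_mult (card S). fact (card S) / zz (card S) k * F k)"
    using count_type[OF assms] by simp
  finally show ?thesis .
qed

definition Phi :: "nat \<Rightarrow> (nat \<Rightarrow> nat) \<Rightarrow> (nat \<Rightarrow> nat) \<Rightarrow> real" where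
  "Phi n k j = (\<Prod>a=1..n. \<Prod>b=1..n.
           (1 + real (\<Sum>d | d dvd lcm a b. d * j d)) ^ (k a * k b * gcd a b))"

lemma prod_group_per:
  fixes h :: "nat \<Rightarrow> real"
  assumes "finite S" "\<sigma> permutes S"
  shows "(\<Prod>x\<in>S. h (per \<sigma> x)) = (\<Prod>a=1..card S. h a ^ cnt S \<sigma> a)"
proof -
  have "(\<Prod>x\<in>S. h (per \<sigma> x)) = (\<Prod>a\<in>{1..card S}. \<Prod>x\<in>{x \<in> S. per \<sigma> x = a}. h (per \<sigma> x))"
    by (rule prod.group[symmetric]) (use assms per_range[OF assms] in auto)
  also have "\<dots> = (\<Prod>a=1..card S. h a ^ cnt S \<sigma> a)"
  proof (rule prod.cong[OF refl])
    fix a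
    have "(\<Prod>x\<in>{x \<in> S. per \<sigma> x = a}. h (per \<sigma> x)) = (\<Prod>x\<in>{x \<in> S. per \<sigma> x = a}. h a)"
      by (rule prod.cong) auto
    thus "(\<Prod>x\<in>{x \<in> S. per \<sigma> x = a}. h (per \<sigma> x)) = h a ^ cnt S \<sigma> a"
      unfolding cnt_def by simp
  qed
  finally show ?thesis .
qed

lemma gfix_formula:
  assumes "finite Q'" "\<beta> permutes Q'" "v0 \<notin> Q'" "0 < L"
  shows "gfix \<beta> (insert v0 Q') L = 1 + (\<Sum>d | d dvd L. d * ct Q' \<beta> d)"
proof -
  have b0: "\<beta> v0 = v0" using assms(2,3) by (simp add: permutes_not_in)
  have per: "periodic \<beta> v" for v by (rule permutes_periodic[OF assms(1,2)])
  have "{v \<in> insert v0 Q'. (\<beta> ^^ L) v = v} = insert v0 {v \<in> Q'. per \<beta> v dvd L}"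
    using funpow_fixpoint[of \<beta> v0 L, OF b0] funpow_per_dvd[OF per] by auto
  hence "gfix \<beta> (insert v0 Q') L = 1 + card {v \<in> Q'. per \<beta> v dvd L}"
    unfolding gfix_def using assms(1,3) by simp
  also have "card {v \<in> Q'. per \<beta> v dvd L} = (\<Sum>d | d dvd L. cnt Q' \<beta> d)"
  proof -
    have finD: "finite {d. d dvd L}" using assms(4) by simp
    have "(\<Sum>d | d dvd L. sum (\<lambda>_. 1::nat) {v \<in> {v \<in> Q'. per \<beta> v dvd L}. per \<beta> v = d}) = sum (\<lambda>_. 1) {v \<in> Q'. per \<beta> v dvd L}"
      by (rule sum.group) (use assms(1) finD in auto)
    moreover have "{v \<in> {v \<in> Q'. per \<beta> v dvd L}. per \<beta> v = d} = {v \<in> Q'. per \<beta> v = d}" if "d dvd L" for d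
      using that by auto
    ultimately show ?thesis unfolding cnt_def by simp
  qed
  also have "(\<Sum>d | d dvd L. cnt Q' \<beta> d) = (\<Sum>d | d dvd L. d * ct Q' \<beta> d)"
    by (rule sum.cong[OF refl]) (use cnt_dvd[OF assms(1,2)] in \<open>auto simp: ct_def\<close>)
  finally show ?thesis .
qed

lemma funpow_pair:
  assumes "\<alpha> permutes X" "x1 \<in> X" "x2 \<in> X"
  shows "((\<lambda>(y1, y2). if y1 \<in> X \<and> y2 \<in> X then (\<alpha> y1, \<alpha> y2) else (y1, y2)) ^^ n) (x1, x2) = ((\<alpha> ^^ n) x1, (\<alpha> ^^ n) x2)"
proof (induction n)
  case 0 then show ?case by simp
next
  case (Suc n)
  have "(\<alpha> ^^ n) x1 \<in> X" "(\<alpha> ^^ n) x2 \<in> X" using bij_funpow_maps[OF assms(1)] assms(2,3) by auto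
  then show ?case using Suc by simp
qed

lemma fixcount:
  assumes finX: "finite X" and ap: "\<alpha> permutes X" and finQ: "finite Q'" and bp: "\<beta> permutes Q'" and v0: "v0 \<notin> Q'"
  shows "real (card {f \<in> (X \<times> X) \<rightarrow>\<^sub>E insert v0 Q'. restrict (\<lambda>(x1, x2). \<beta> (f (\<alpha> x1, \<alpha> x2))) (X \<times> X) = f})
       = Phi (card X) (ct X \<alpha>) (ct Q' \<beta>)"
proof -
  define \<alpha>2 where "\<alpha>2 = (\<lambda>(y1, y2). if y1 \<in> X \<and> y2 \<in> X then (\<alpha> y1, \<alpha> y2) else (y1, y2))"
  let ?B = "insert v0 Q'"
  have a2p: "\<alpha>2 permutes (X \<times> X)"
  proof (rule inj_imp_permutes)
    show "inj_on \<alpha>2 (X \<times> X)" unfolding \<alpha>2_def inj_on_def using permutes_inj[OF ap] by (auto simp: inj_eq)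
    show "finite (X \<times> X)" using finX by simp
    show "\<alpha>2 x \<in> X \<times> X" if "x \<in> X \<times> X" for x
      using that permutes_in_image[OF ap] unfolding \<alpha>2_def by auto
    show "\<alpha>2 x = x" if "x \<notin> X \<times> X" for x using that unfolding \<alpha>2_def by (cases x) auto
  qed
  have finXX: "finite (X \<times> X)" using finX by simp
  have a2inj: "inj \<alpha>2" using permutes_inj[OF a2p] .
  have a2per: "periodic \<alpha>2 x" for x by (rule permutes_periodic[OF finXX a2p])
  have bB: "\<beta> permutes ?B" using bp by (rule permutes_subset) auto
  have bv0: "\<beta> v0 = v0" using bp v0 by (simp add: permutes_not_in)
  have setEq: "{f \<in> (X \<times> X) \<rightarrow>\<^sub>E ?B. restrict (\<lambda>(x1, x2). \<beta> (f (\<alpha> x1, \<alpha> x2))) (X \<times> X) = f}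
        = FixS \<alpha>2 \<beta> ?B (X \<times> X)"
  proof -
    have "restrict (\<lambda>(x1, x2). \<beta> (f (\<alpha> x1, \<alpha> x2))) (X \<times> X) = f \<longleftrightarrow> (\<forall>x\<in>X \<times> X. \<beta> (f (\<alpha>2 x)) = f x)"
      if f: "f \<in> (X \<times> X) \<rightarrow>\<^sub>E ?B" for f
    proof
      assume h: "restrict (\<lambda>(x1, x2). \<beta> (f (\<alpha> x1, \<alpha> x2))) (X \<times> X) = f"
      show "\<forall>x\<in>X \<times> X. \<beta> (f (\<alpha>2 x)) = f x"
      proof
        fix x assume x: "x \<in> X \<times> X"
        then obtain x1 x2 where "x = (x1, x2)" "x1 \<in> X" "x2 \<in> X" by auto
        thus "\<beta> (f (\<alpha>2 x)) = f x" using fun_cong[OF h, of x] unfolding \<alpha>2_def by simp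
      qed
    next
      assume h: "\<forall>x\<in>X \<times> X. \<beta> (f (\<alpha>2 x)) = f x"
      show "restrict (\<lambda>(x1, x2). \<beta> (f (\<alpha> x1, \<alpha> x2))) (X \<times> X) = f"
      proof
        fix x show "restrict (\<lambda>(x1, x2). \<beta> (f (\<alpha> x1, \<alpha> x2))) (X \<times> X) x = f x"
        proof (cases "x \<in> X \<times> X")
          case True
          then obtain x1 x2 where "x = (x1, x2)" "x1 \<in> X" "x2 \<in> X" by auto
          then show ?thesis using h True unfolding \<alpha>2_def by auto
        next
          case False
          then show ?thesis using f PiE_arb[OF f False] by simp
        qed
      qed
    qed
    thus ?thesis unfolding FixS_def by auto
  qed
  have per2: "per \<alpha>2 (x1, x2) = lcm (per \<alpha> x1) (per \<alpha> x2)" if "x1 \<in> X" "x2 \<in> X" for x1 x2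
  proof -
    have pa: "periodic \<alpha> x" for x by (rule permutes_periodic[OF finX ap])
    have iff: "per \<alpha>2 (x1, x2) dvd m \<longleftrightarrow> lcm (per \<alpha> x1) (per \<alpha> x2) dvd m" for m
    proof -
      have "per \<alpha>2 (x1, x2) dvd m \<longleftrightarrow> (\<alpha>2 ^^ m) (x1, x2) = (x1, x2)"
        using funpow_per_dvd[OF a2per] by simp
      also have "\<dots> \<longleftrightarrow> (\<alpha> ^^ m) x1 = x1 \<and> (\<alpha> ^^ m) x2 = x2"
        using funpow_pair[OF ap that, of m] unfolding \<alpha>2_def by simp
      also have "\<dots> \<longleftrightarrow> lcm (per \<alpha> x1) (per \<alpha> x2) dvd m"
        using funpow_per_dvd[OF pa] by simp
      finally show ?thesis .
    qed
    show ?thesis using iff[of "per \<alpha>2 (x1, x2)"] iff[of "lcm (per \<alpha> x1) (per \<alpha> x2)"]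
      by (simp add: dvd_antisym)
  qed
  define \<phi> where "\<phi> L = real (gfix \<beta> ?B L) powr (1 / real L)" for L
  have "real (card (FixS \<alpha>2 \<beta> ?B (X \<times> X))) = (\<Prod>x\<in>X \<times> X. \<phi> (per \<alpha>2 x))"
    unfolding \<phi>_def
    by (rule fix_card_prod[OF a2inj a2per bB _ _ bv0 finXX]) (use finQ permutes_in_image[OF a2p] in auto)
  also have "\<dots> = (\<Prod>(x1, x2)\<in>X \<times> X. \<phi> (lcm (per \<alpha> x1) (per \<alpha> x2)))"
    by (rule prod.cong[OF refl]) (auto simp: per2)
  also have "\<dots> = (\<Prod>x1\<in>X. \<Prod>x2\<in>X. \<phi> (lcm (per \<alpha> x1) (per \<alpha> x2)))"
    by (rule prod.cartesian_product[symmetric])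
  also have "\<dots> = (\<Prod>x1\<in>X. \<Prod>b=1..card X. \<phi> (lcm (per \<alpha> x1) b) ^ cnt X \<alpha> b)"
    by (rule prod.cong[OF refl]) (rule prod_group_per[OF finX ap])
  also have "\<dots> = (\<Prod>a=1..card X. (\<Prod>b=1..card X. \<phi> (lcm a b) ^ cnt X \<alpha> b) ^ cnt X \<alpha> a)"
    by (rule prod_group_per[OF finX ap])
  also have "\<dots> = (\<Prod>a=1..card X. \<Prod>b=1..card X. \<phi> (lcm a b) ^ (cnt X \<alpha> a * cnt X \<alpha> b))"
    by (simp add: prod_power_distrib power_mult[symmetric] mult.commute)
  also have "\<dots> = Phi (card X) (ct X \<alpha>) (ct Q' \<beta>)"
    unfolding Phi_def
  proof (rule prod.cong[OF refl], rule prod.cong[OF refl])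
    fix a b assume a: "a \<in> {1..card X}" and b: "b \<in> {1..card X}"
    let ?L = "lcm a b" and ?g = "real (gfix \<beta> ?B (lcm a b))"
    have L0: "0 < ?L" using a b by (simp add: lcm_pos_nat)
    have gf: "gfix \<beta> ?B ?L = 1 + (\<Sum>d | d dvd ?L. d * ct Q' \<beta> d)"
      by (rule gfix_formula[OF finQ bp v0 L0])
    have gpos: "0 < ?g" using gf by (simp only:) 
    have ca: "cnt X \<alpha> a = a * ct X \<alpha> a"
      using cnt_dvd[OF finX ap, of a] unfolding ct_def by (simp add: dvd_mult_div_cancel)
    have cb: "cnt X \<alpha> b = b * ct X \<alpha> b"
      using cnt_dvd[OF finX ap, of b] unfolding ct_def by (simp add: dvd_mult_div_cancel)
    have ab: "a * b = gcd a b * ?L" by (rule prod_gcd_lcm_nat)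
    have e: "real (cnt X \<alpha> a * cnt X \<alpha> b) * (1 / real ?L) = real (ct X \<alpha> a * ct X \<alpha> b * gcd a b)"
    proof -
      have eq: "cnt X \<alpha> a * cnt X \<alpha> b = (ct X \<alpha> a * ct X \<alpha> b * gcd a b) * ?L"
        using ca cb ab by (simp add: algebra_simps)
      have h: "real (cnt X \<alpha> a * cnt X \<alpha> b) = real (ct X \<alpha> a * ct X \<alpha> b * gcd a b) * real ?L"
        unfolding eq by (simp only: of_nat_mult)
      show ?thesis using L0 a b unfolding h by simp
    qed
    have "\<phi> ?L ^ (cnt X \<alpha> a * cnt X \<alpha> b) = ?g powr (real (cnt X \<alpha> a * cnt X \<alpha> b) * (1 / real ?L))"
      unfolding \<phi>_def using gpos by (simp add: powr_power)
    also have "\<dots> = ?g ^ (ct X \<alpha> a * ct X \<alpha> b * gcd a b)"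
      unfolding e using powr_realpow[OF gpos] by presburger
    finally show "\<phi> ?L ^ (cnt X \<alpha> a * cnt X \<alpha> b) =
        (1 + real (\<Sum>d | d dvd lcm a b. d * ct Q' \<beta> d)) ^ (ct X \<alpha> a * ct X \<alpha> b * gcd a b)"
      using gf by simp
  qed
  finally show ?thesis using setEq by simp
qed

definition PG :: "nat \<Rightarrow> nat \<Rightarrow> ((nat \<Rightarrow> nat) \<times> (nat \<Rightarrow> nat)) monoid" where
  "PG p q = \<lparr>carrier = pg_elems p q, monoid.mult = (\<lambda>g h. (fst h \<circ> fst g, snd g \<circ> snd h)), one = (id, id)\<rparr>"

definition PGact :: "nat \<Rightarrow> nat \<Rightarrow> ((nat \<Rightarrow> nat) \<times> (nat \<Rightarrow> nat)) \<Rightarrow> (nat \<times> nat \<Rightarrow> nat) \<Rightarrow> (nat \<times> nat \<Rightarrow> nat)" where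
  "PGact p q g = restrict (pg_act p q (fst g) (snd g)) (funs p q)"

lemma pg_act_funs:
  assumes "f \<in> funs p q" "(\<alpha>, \<beta>) \<in> pg_elems p q"
  shows "pg_act p q \<alpha> \<beta> f \<in> funs p q"
proof -
  have a: "\<alpha> permutes Xset p q" and b: "\<beta> permutes {1..q}" using assms(2) unfolding pg_elems_def by auto
  have "\<beta> (f (\<alpha> x1, \<alpha> x2)) \<in> {1..q}" if "x1 \<in> Xset p q" "x2 \<in> Xset p q" for x1 x2
  proof -
    have "(\<alpha> x1, \<alpha> x2) \<in> Xset p q \<times> Xset p q" using that permutes_in_image[OF a] by auto
    hence "f (\<alpha> x1, \<alpha> x2) \<in> {1..q}" using assms(1) unfolding funs_def by auto
    thus ?thesis using permutes_in_image[OF b] by simp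
  qed
  thus ?thesis unfolding funs_def pg_act_def by auto
qed

lemma pg_act_comp:
  assumes "f \<in> funs p q" "\<alpha> permutes Xset p q"
  shows "pg_act p q \<alpha> \<beta> (pg_act p q \<alpha>' \<beta>' f) = pg_act p q (\<alpha>' \<circ> \<alpha>) (\<beta> \<circ> \<beta>') f"
proof
  fix x
  show "pg_act p q \<alpha> \<beta> (pg_act p q \<alpha>' \<beta>' f) x = pg_act p q (\<alpha>' \<circ> \<alpha>) (\<beta> \<circ> \<beta>') f x"
  proof (cases "x \<in> Xset p q \<times> Xset p q")
    case True
    then obtain x1 x2 where x: "x = (x1, x2)" "x1 \<in> Xset p q" "x2 \<in> Xset p q" by auto
    have "\<alpha> x1 \<in> Xset p q" "\<alpha> x2 \<in> Xset p q" using x permutes_in_image[OF assms(2)] by auto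
    then show ?thesis using x unfolding pg_act_def by simp
  next
    case False
    then show ?thesis unfolding pg_act_def by simp
  qed
qed

lemma pg_act_id:
  assumes "f \<in> funs p q"
  shows "pg_act p q id id f = f"
proof
  fix x show "pg_act p q id id f x = f x"
  proof (cases "x \<in> Xset p q \<times> Xset p q")
    case True then show ?thesis unfolding pg_act_def by auto
  next
    case False then show ?thesis using PiE_arb[of f, OF assms[unfolded funs_def] False] unfolding pg_act_def by simp
  qed
qed

lemma inv_fix1:
  assumes "\<beta> permutes S" "\<beta> 1 = 1"
  shows "inv_into UNIV \<beta> 1 = 1"
  using permutes_inverses(2)[OF assms(1), of 1] assms(2) by simp

lemma pg_elems_inv:
  assumes "(\<alpha>, \<beta>) \<in> pg_elems p q"
  shows "(inv_into UNIV \<alpha>, inv_into UNIV \<beta>) \<in> pg_elems p q"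
proof -
  have a: "\<alpha> permutes Xset p q" and b: "\<beta> permutes {1..q}" and b1: "\<beta> 1 = 1"
    using assms unfolding pg_elems_def by auto
  show ?thesis using permutes_inv[OF a] permutes_inv[OF b] inv_fix1[OF b b1] unfolding pg_elems_def by simp
qed

lemma group_PG: "group (PG p q)"
proof (rule groupI)
  fix x y assume "x \<in> carrier (PG p q)" "y \<in> carrier (PG p q)"
  thus "x \<otimes>\<^bsub>PG p q\<^esub> y \<in> carrier (PG p q)"
    unfolding PG_def pg_elems_def by (auto intro: permutes_compose)
next
  show "\<one>\<^bsub>PG p q\<^esub> \<in> carrier (PG p q)" unfolding PG_def pg_elems_def by (simp add: permutes_id)
next
  fix x y z show "x \<otimes>\<^bsub>PG p q\<^esub> y \<otimes>\<^bsub>PG p q\<^esub> z = x \<otimes>\<^bsub>PG p q\<^esub> (y \<otimes>\<^bsub>PG p q\<^esub> z)"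
    unfolding PG_def by (simp add: comp_assoc)
next
  fix x show "\<one>\<^bsub>PG p q\<^esub> \<otimes>\<^bsub>PG p q\<^esub> x = x" unfolding PG_def by simp
next
  fix x assume x: "x \<in> carrier (PG p q)"
  obtain \<alpha> \<beta> where xe: "x = (\<alpha>, \<beta>)" by (cases x)
  have m: "(\<alpha>, \<beta>) \<in> pg_elems p q" using x xe unfolding PG_def by simp
  hence a: "\<alpha> permutes Xset p q" and b: "\<beta> permutes {1..q}" unfolding pg_elems_def by auto
  have "(inv_into UNIV \<alpha>, inv_into UNIV \<beta>) \<in> carrier (PG p q)" using pg_elems_inv[OF m] unfolding PG_def by simp
  moreover have "(inv_into UNIV \<alpha>, inv_into UNIV \<beta>) \<otimes>\<^bsub>PG p q\<^esub> x = \<one>\<^bsub>PG p q\<^esub>"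
    unfolding PG_def xe using permutes_inv_o[OF a] permutes_inv_o[OF b] by simp
  ultimately show "\<exists>y\<in>carrier (PG p q). y \<otimes>\<^bsub>PG p q\<^esub> x = \<one>\<^bsub>PG p q\<^esub>" by blast
qed

lemma PG_action: "group_action (PG p q) (funs p q) (PGact p q)"
  unfolding group_action_def group_hom_def group_hom_axioms_def
proof (intro conjI group_PG group_BijGroup)
  have bij: "PGact p q g \<in> Bij (funs p q)" if g: "g \<in> pg_elems p q" for g
  proof -
    obtain \<alpha> \<beta> where ge: "g = (\<alpha>, \<beta>)" by (cases g)
    have m: "(\<alpha>, \<beta>) \<in> pg_elems p q" using g ge by simp
    have mi: "(inv_into UNIV \<alpha>, inv_into UNIV \<beta>) \<in> pg_elems p q" by (rule pg_elems_inv[OF m])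
    have a: "\<alpha> permutes Xset p q" and b: "\<beta> permutes {1..q}" using m unfolding pg_elems_def by auto
    have ai: "inv_into UNIV \<alpha> permutes Xset p q" using permutes_inv[OF a] .
    have "bij_betw (pg_act p q \<alpha> \<beta>) (funs p q) (funs p q)"
    proof (rule bij_betwI[where g = "pg_act p q (inv_into UNIV \<alpha>) (inv_into UNIV \<beta>)"])
      show "pg_act p q \<alpha> \<beta> \<in> funs p q \<rightarrow> funs p q" using pg_act_funs[OF _ m] by auto
      show "pg_act p q (inv_into UNIV \<alpha>) (inv_into UNIV \<beta>) \<in> funs p q \<rightarrow> funs p q" using pg_act_funs[OF _ mi] by auto
    next
      fix f assume f: "f \<in> funs p q"
      have "pg_act p q (inv_into UNIV \<alpha>) (inv_into UNIV \<beta>) (pg_act p q \<alpha> \<beta> f) = pg_act p q (\<alpha> \<circ> inv_into UNIV \<alpha>) (inv_into UNIV \<beta> \<circ> \<beta>) f"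
        by (rule pg_act_comp[OF f ai])
      also have "\<dots> = f" using permutes_inv_o[OF a] permutes_inv_o[OF b] pg_act_id[OF f] by simp
      finally show "pg_act p q (inv_into UNIV \<alpha>) (inv_into UNIV \<beta>) (pg_act p q \<alpha> \<beta> f) = f" .
    next
      fix f assume f: "f \<in> funs p q"
      have "pg_act p q \<alpha> \<beta> (pg_act p q (inv_into UNIV \<alpha>) (inv_into UNIV \<beta>) f) = pg_act p q (inv_into UNIV \<alpha> \<circ> \<alpha>) (\<beta> \<circ> inv_into UNIV \<beta>) f"
        by (rule pg_act_comp[OF f a])
      also have "\<dots> = f" using permutes_inv_o[OF a] permutes_inv_o[OF b] pg_act_id[OF f] by simp
      finally show "pg_act p q \<alpha> \<beta> (pg_act p q (inv_into UNIV \<alpha>) (inv_into UNIV \<beta>) f) = f" .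
    qed
    hence "bij_betw (PGact p q g) (funs p q) (funs p q)"
      unfolding PGact_def ge by (rule bij_betw_cong[THEN iffD1, rotated]) simp
    thus ?thesis unfolding Bij_def PGact_def by simp
  qed
  show "PGact p q \<in> hom (PG p q) (BijGroup (funs p q))"
  proof (rule homI)
    fix g assume "g \<in> carrier (PG p q)"
    thus "PGact p q g \<in> carrier (BijGroup (funs p q))" using bij unfolding PG_def BijGroup_def by simp
  next
    fix g h assume g: "g \<in> carrier (PG p q)" and h: "h \<in> carrier (PG p q)"
    have gb: "PGact p q g \<in> Bij (funs p q)" and hb: "PGact p q h \<in> Bij (funs p q)"
      using bij g h unfolding PG_def by auto
    have ga: "fst g permutes Xset p q" using g unfolding PG_def pg_elems_def by auto
    show "PGact p q (g \<otimes>\<^bsub>PG p q\<^esub> h) = PGact p q g \<otimes>\<^bsub>BijGroup (funs p q)\<^esub> PGact p q h"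
    proof -
      have "PGact p q g \<otimes>\<^bsub>BijGroup (funs p q)\<^esub> PGact p q h = compose (funs p q) (PGact p q g) (PGact p q h)"
        using gb hb unfolding BijGroup_def by simp
      also have "\<dots> = PGact p q (g \<otimes>\<^bsub>PG p q\<^esub> h)"
      proof
        fix f show "compose (funs p q) (PGact p q g) (PGact p q h) f = PGact p q (g \<otimes>\<^bsub>PG p q\<^esub> h) f"
        proof (cases "f \<in> funs p q")
          case True
          have hm: "(fst h, snd h) \<in> pg_elems p q" using h unfolding PG_def by simp
          have "pg_act p q (fst h) (snd h) f \<in> funs p q" by (rule pg_act_funs[OF True hm])
          thus ?thesis using True pg_act_comp[OF True ga]
            unfolding compose_def PGact_def PG_def by simp
        next
          case False
          then show ?thesis unfolding compose_def PGact_def by simp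
        qed
      qed
      finally show ?thesis by simp
    qed
  qed
qed

lemma pg_elems_eq:
  assumes "1 \<le> q"
  shows "pg_elems p q = {\<alpha>. \<alpha> permutes Xset p q} \<times> {\<beta>. \<beta> permutes {2..q}}"
proof -
  have "(\<beta> permutes {1..q} \<and> \<beta> 1 = 1) \<longleftrightarrow> \<beta> permutes {2..q}" for \<beta> :: "nat \<Rightarrow> nat"
  proof
    assume h: "\<beta> permutes {1..q} \<and> \<beta> 1 = 1"
    show "\<beta> permutes {2..q}"
    proof (rule permutes_superset[of _ "{1..q}"])
      show "\<beta> permutes {1..q}" using h by simp
      fix x assume "x \<in> {1..q} - {2..q}"
      hence "x = 1" by auto
      thus "\<beta> x = x" using h by simp
    qed
  next
    assume h: "\<beta> permutes {2..q}"
    show "\<beta> permutes {1..q} \<and> \<beta> 1 = 1"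
      using permutes_subset[OF h, of "{1..q}"] permutes_not_in[OF h, of 1] by auto
  qed
  thus ?thesis unfolding pg_elems_def by auto
qed

lemma finite_pg_elems: "finite (pg_elems p q)"
proof (rule finite_subset)
  show "pg_elems p q \<subseteq> {\<alpha>. \<alpha> permutes Xset p q} \<times> {\<beta>. \<beta> permutes {1..q}}"
    unfolding pg_elems_def by auto
  show "finite ({\<alpha>. \<alpha> permutes Xset p q} \<times> {\<beta>. \<beta> permutes {1..q}})"
    by (intro finite_cartesian_product finite_permutations) (auto simp: Xset_def)
qed

lemma finite_funs: "finite (funs p q)"
  unfolding funs_def by (intro finite_PiE) (auto simp: Xset_def)

lemma burnside_pg:
  "card (pg_orbit p q ` funs p q) * card (pg_elems p q) =
   (\<Sum>g\<in>pg_elems p q. card {f \<in> funs p q. pg_act p q (fst g) (snd g) f = f})"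
proof -
  interpret ga: group_action "PG p q" "funs p q" "PGact p q" by (rule PG_action)
  have fc: "finite (carrier (PG p q))" unfolding PG_def using finite_pg_elems by simp
  have B: "card (orbits (PG p q) (funs p q) (PGact p q)) * order (PG p q) =
        (\<Sum>g \<in> carrier (PG p q). card (invariants (funs p q) (PGact p q) g))"
    by (rule ga.burnside[OF fc finite_funs])
  have O: "orbits (PG p q) (funs p q) (PGact p q) = pg_orbit p q ` funs p q"
  proof -
    have "Group_Action.orbit (PG p q) (PGact p q) f = pg_orbit p q f" if "f \<in> funs p q" for f
      unfolding Group_Action.orbit_def pg_orbit_def PGact_def PG_def using that by force
    thus ?thesis unfolding orbits_def by auto
  qed
  have I: "invariants (funs p q) (PGact p q) g = {f \<in> funs p q. pg_act p q (fst g) (snd g) f = f}" for g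
    unfolding invariants_def PGact_def by auto
  show ?thesis using B unfolding O I order_def by (simp add: PG_def)
qed

theorem mainTheorem10:
  fixes p q :: nat
  assumes "1 \<le> q" and "q < p"
  shows "real (num_orbits p q) = N_formula p q"
proof -
  let ?X = "Xset p q" and ?Q = "{2..q} :: nat set" and ?n = "p - q" and ?m = "q - 1"
  have finX: "finite ?X" by (simp add: Xset_def)
  have finQ: "finite ?Q" by simp
  have cX: "card ?X = ?n"
  proof -
    have "?X = {Suc q..p}" unfolding Xset_def by auto
    thus ?thesis by simp
  qed
  have cQ: "card ?Q = ?m" by simp
  have iQ: "insert 1 ?Q = {1..q}" using assms(1) by auto
  have n1: "(1::nat) \<notin> ?Q" by simp
  let ?PX = "{\<alpha>. \<alpha> permutes ?X}" and ?PQ = "{\<beta>. \<beta> permutes ?Q}"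
  have fix_eq: "real (card {f \<in> funs p q. pg_act p q \<alpha> \<beta> f = f}) = Phi ?n (ct ?X \<alpha>) (ct ?Q \<beta>)"
    if a: "\<alpha> permutes ?X" and b: "\<beta> permutes ?Q" for \<alpha> \<beta>
  proof -
    have "{f \<in> funs p q. pg_act p q \<alpha> \<beta> f = f} =
      {f \<in> (?X \<times> ?X) \<rightarrow>\<^sub>E insert 1 ?Q. restrict (\<lambda>(x1, x2). \<beta> (f (\<alpha> x1, \<alpha> x2))) (?X \<times> ?X) = f}"
      unfolding funs_def pg_act_def iQ by simp
    thus ?thesis using fixcount[OF finX a finQ b n1] cX by simp
  qed
  have S1: "real (num_orbits p q) * (fact ?n * fact ?m) =
     (\<Sum>\<alpha>\<in>?PX. \<Sum>\<beta>\<in>?PQ. Phi ?n (ct ?X \<alpha>) (ct ?Q \<beta>))"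
  proof -
    have cP: "card (pg_elems p q) = fact ?n * fact ?m"
      unfolding pg_elems_eq[OF assms(1)] card_cartesian_product
      using card_permutations[OF cX finX] card_permutations[OF cQ finQ] by simp
    have "real (num_orbits p q) * (fact ?n * fact ?m) = real (num_orbits p q * card (pg_elems p q))"
      using cP by simp
    also have "\<dots> = (\<Sum>g\<in>pg_elems p q. real (card {f \<in> funs p q. pg_act p q (fst g) (snd g) f = f}))"
      using burnside_pg[of p q] unfolding num_orbits_def by (simp flip: of_nat_sum)
    also have "\<dots> = (\<Sum>g\<in>?PX \<times> ?PQ. Phi ?n (ct ?X (fst g)) (ct ?Q (snd g)))"
      unfolding pg_elems_eq[OF assms(1)] by (rule sum.cong[OF refl]) (auto simp: fix_eq)
    also have "\<dots> = (\<Sum>\<alpha>\<in>?PX. \<Sum>\<beta>\<in>?PQ. Phi ?n (ct ?X \<alpha>) (ct ?Q \<beta>))"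
      by (simp add: sum.cartesian_product split_beta)
    finally show ?thesis .
  qed
  also have "\<dots> = (\<Sum>\<alpha>\<in>?PX. \<Sum>j\<in>partitions_mult ?m. fact ?m / zz ?m j * Phi ?n (ct ?X \<alpha>) j)"
    by (rule sum.cong[OF refl]) (use sum_over_perms[OF finQ, of "\<lambda>j. Phi ?n (ct ?X _) j"] cQ in simp)
  also have "\<dots> = (\<Sum>j\<in>partitions_mult ?m. fact ?m / zz ?m j * (\<Sum>\<alpha>\<in>?PX. Phi ?n (ct ?X \<alpha>) j))"
    by (subst sum.swap) (simp add: sum_distrib_left)
  also have "\<dots> = (\<Sum>j\<in>partitions_mult ?m. fact ?m / zz ?m j *
                    (\<Sum>k\<in>partitions_mult ?n. fact ?n / zz ?n k * Phi ?n k j))"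
    by (rule sum.cong[OF refl]) (use sum_over_perms[OF finX, of "\<lambda>k. Phi ?n k _"] cX in simp)
  also have "\<dots> = (fact ?n * fact ?m) * N_formula p q"
    unfolding N_formula_def Phi_def zz_def
    by (simp add: sum_distrib_left sum_divide_distrib field_simps)
  finally show ?thesis by simp
qed

end
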